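(* Let $n,k,t$ be positive integers with $k<n$, let $q$ be a prime power, and let $\mathcal{D}$ be the Desarguesian $(t-1)$-spread of $\mathrm{PG}(nt-1,q)$. Let $\Omega$ be an $(nt-kt-2)$-dimensional subspace of $\mathrm{PG}(nt-1,q)$, let $\Gamma$ be a plane of $\mathrm{PG}(nt-1,q)$ skew from $\Omega$, and let $\bar{B}$ be a minimal blocking set (with respect to lines) of the plane $\Gamma$ such that every point of $\bar{B}$ lies on at least $2$ tangent lines to $\bar{B}$ in $\Gamma$. Let $K$ be the cone with vertex $\Omega$ and base $\bar{B}$. Then $\mathcal{B}(K)$ is a minimal blocking set with respect to $(k-1)$-dimensional subspaces of $\mathrm{PG}(n-1,q^t)$.
   Context: Field reduction: each point of $\mathrm{PG}(n-1,q^t)$ is a $1$-dimensional $\mathbb{F}_{q^t}$-subspace of $\mathbb{F}_{q^t}^n$, which is a $t$-dimensional $\mathbb{F}_q$-subspace of $\mathbb{F}_q^{nt}$, i.e. a $(t-1)$-dimensional subspace of $\mathrm{PG}(nt-1,q)$; the set $\mathcal{D}$ of all these $(t-1)$-spaces partitions the points of $\mathrm{PG}(nt-1,q)$ and is called the Desarguesian $(t-1)$-spread. For $U\subseteq \mathrm{PG}(nt-1,q)$, $\mathcal{B}(U)$ denotes the set of elements of $\mathcal{D}$ meeting $U$, identified with the corresponding set of points of $\mathrm{PG}(n-1,q^t)$. The cone with vertex a subspace $\Omega$ and base a point set $\bar{B}$ contained in a subspace skew from $\Omega$ is $\bigcup_{P\in\bar{B}}\langle P,\Omega\rangle$. A blocking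 set with respect to $j$-spaces is a set of points meeting every $j$-dimensional subspace; it is minimal if no proper subset has this property. A tangent line to a planar point set $\bar{B}$ is a line meeting $\bar{B}$ in exactly one point. *)

theory Defs
  imports "HOL-Analysis.Analysis"
begin

text \<open>The ambient vector space is \<open>'a ^ 'n\<close> where
  \<open>'a\<close> is a finite field of order q^t and \<open>CARD('n) = n\<close>.  Viewed over
  the subfield \<open>Fq\<close> of order q it is the vector space underlying PG(nt-1,q);
  viewed over \<open>'a\<close> it underlies PG(n-1,q^t).  Subspaces are represented as
  sets of vectors; a scalar set F selects the base field (\<open>Fq\<close> or \<open>UNIV\<close>).\<close>

definition subfield_q :: "nat \<Rightarrow> ('a::field) set" where
  "subfield_q q = {x. x ^ q = x}"

definition span_over :: "'a::field set \<Rightarrow> ('a ^ 'n) set \<Rightarrow> ('a ^ 'n) set" where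
  "span_over F X = {\<Sum>v\<in>Y. c v *s v | Y c. finite Y \<and> Y \<subseteq> X \<and> (\<forall>v\<in>Y. c v \<in> F)}"

definition indep_over :: "'a::field set \<Rightarrow> ('a ^ 'n) set \<Rightarrow> bool" where
  "indep_over F X = (\<forall>Y c. finite Y \<and> Y \<subseteq> X \<and> (\<forall>v\<in>Y. c v \<in> F)
      \<and> (\<Sum>v\<in>Y. c v *s v) = 0 \<longrightarrow> (\<forall>v\<in>Y. c v = 0))"

text \<open>\<open>vsub F d S\<close>: S is an F-subspace of vector dimension d
  (i.e. a projective (d-1)-space).\<close>
definition vsub :: "'a::field set \<Rightarrow> nat \<Rightarrow> ('a ^ 'n) set \<Rightarrow> bool" where
  "vsub F d S = (\<exists>B. finite B \<and> card B = d \<and> indep_over F B \<and> span_over F B = S)"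

definition proj_points :: "'a::field set \<Rightarrow> ('a ^ 'n) set set" where
  "proj_points F = {P. vsub F 1 P}"

definition blocking :: "('a ^ 'n) set set \<Rightarrow> ('a ^ 'n) set set \<Rightarrow> ('a ^ 'n) set set \<Rightarrow> bool" where
  "blocking Pts Subs A = (A \<subseteq> Pts \<and> (\<forall>W\<in>Subs. \<exists>P\<in>A. P \<subseteq> W))"

definition minimal_blocking :: "('a ^ 'n) set set \<Rightarrow> ('a ^ 'n) set set \<Rightarrow> ('a ^ 'n) set set \<Rightarrow> bool" where
  "minimal_blocking Pts Subs A = (blocking Pts Subs A \<and> (\<forall>A'. A' \<subset> A \<longrightarrow> \<not> blocking Pts Subs A'))"

definition cone :: "'a::field set \<Rightarrow> ('a ^ 'n) set \<Rightarrow> ('a ^ 'n) set set \<Rightarrow> ('a ^ 'n) set set" where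
  "cone F \<Omega> Bb = (\<Union>P\<in>Bb. {Q \<in> proj_points F. Q \<subseteq> span_over F (P \<union> \<Omega>)})"

text \<open>\<open>\<B>(U)\<close>: the elements of the Desarguesian spread (= points of PG(n-1,q^t),
  i.e. 1-dimensional 'a-subspaces) meeting the Fq-point set U.\<close>
definition spread_B :: "('a::field ^ 'n) set set \<Rightarrow> ('a ^ 'n) set set" where
  "spread_B U = {X \<in> proj_points UNIV. \<exists>Q\<in>U. Q \<subseteq> X}"

end

theory Submission
  imports Defs "HOL-Computational_Algebra.Polynomial" "HOL-Computational_Algebra.Primes"
begin



lemma ff_power_card: "(x::'a::{field,finite}) ^ CARD('a) = x"
proof (cases "x = 0")
  case False
  have "x * (\<Prod>y\<in>UNIV-{0}. x * y) = x * x ^ (card (UNIV :: 'a set) - 1) * \<Prod>(UNIV-{0})"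
    by (simp add: prod.distrib mult_ac)
  also have "x * x ^ (card (UNIV :: 'a set) - 1) = x ^ Suc (card (UNIV :: 'a set) - 1)"
    by (subst power_Suc) auto
  also have "Suc (card (UNIV :: 'a set) - 1) = card (UNIV :: 'a set)"
    using finite_UNIV_card_ge_0[where ?'a = 'a] by simp
  also have "(\<Prod>y\<in>UNIV-{0}. x * y) = (\<Prod>y\<in>UNIV-{0}. y)"
    by (rule prod.reindex_bij_witness[of _ "\<lambda>y. y / x" "\<lambda>y. x * y"]) (use False in auto)
  finally show ?thesis
    by simp
qed (use finite_UNIV_card_ge_0[where ?'a = 'a] in auto)

lemma ff_card_times: "of_nat CARD('a) * (x::'a::{field,finite}) = 0"
proof -
  have "(\<Sum>y\<in>UNIV. x + y) = (\<Sum>y\<in>UNIV. y)"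
    by (rule sum.reindex_bij_witness[of _ "\<lambda>y. y - x" "\<lambda>y. x + y"]) auto
  hence "of_nat CARD('a) * x + (\<Sum>y\<in>UNIV. y) = (\<Sum>y\<in>UNIV. y)"
    by (simp add: sum.distrib)
  thus ?thesis by simp
qed

definition subfld :: "'a::field set \<Rightarrow> bool" where
  "subfld F \<longleftrightarrow> 0 \<in> F \<and> 1 \<in> F \<and> (\<forall>a\<in>F. \<forall>b\<in>F. a + b \<in> F \<and> a * b \<in> F)
     \<and> (\<forall>a\<in>F. - a \<in> F) \<and> (\<forall>a\<in>F. inverse a \<in> F)"

lemma Fq_facts:
  fixes q t p e :: nat
  assumes p: "prime p" and e: "e > 0" and qd: "q = p ^ e" and t: "t > 0"
    and card: "CARD('a::{field,finite}) = q ^ t"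
  shows "subfld (subfield_q q :: 'a set)" and "card (subfield_q q :: 'a set) = q"
proof -
  have "of_nat (CARD('a)) * (1::'a) = 0" by (rule ff_card_times)
  hence "(of_nat p :: 'a) ^ (e * t) = 0" using card qd by (simp add: power_mult of_nat_power)
  hence p0: "(of_nat p :: 'a) = 0" by simp
  have charp: "CHAR('a) = p"
  proof -
    have "CHAR('a) dvd p" using p0 of_nat_eq_0_iff_char_dvd by blast
    moreover have "CHAR('a) \<noteq> 1" by simp
    ultimately show ?thesis using p by (metis prime_nat_iff)
  qed
  have pc: "prime CHAR('a)" using charp p by simp
  have frob: "\<And>x y::'a. (x + y) ^ q = x ^ q + y ^ q"
    by (rule freshmans_dream'[OF pc]) (simp add: charp qd)
  have p2: "p \<ge> 2" using p by (simp add: prime_ge_2_nat)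
  have "p ^ 1 \<le> p ^ e" using e p2 by (intro power_increasing) auto
  hence q2: "q \<ge> 2" using qd p2 by simp
  have c0: "(0::'a) ^ q = 0" using q2 by simp
  have cadd: "(a + b) ^ q = a + b" if "a ^ q = a" "b ^ q = b" for a b :: 'a
    using that by (simp add: frob)
  have cmul: "(a * b) ^ q = a * b" if "a ^ q = a" "b ^ q = b" for a b :: 'a
    using that by (simp add: power_mult_distrib)
  have cneg: "(- a) ^ q = - a" if a: "a ^ q = a" for a :: 'a
  proof -
    have "(- a + a) ^ q = (-a) ^ q + a ^ q" by (rule frob)
    hence "0 = (-a)^q + a" using c0 a by simp
    thus "(- a) ^ q = - a" by (simp add: eq_neg_iff_add_eq_0 add.commute)
  qed
  have cinv: "inverse a ^ q = inverse a" if a: "a ^ q = a" for a :: 'a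
    using a by (simp add: power_inverse)
  show sf: "subfld (subfield_q q :: 'a set)"
    unfolding subfld_def subfield_q_def using c0 cadd cmul cneg cinv by auto
  define F where "F = (subfield_q q :: 'a set)"
  define g :: "'a poly" where "g = monom 1 q - [:0, 1:]"
  have polyg: "poly g x = x ^ q - x" for x by (simp add: g_def poly_monom)
  have g0: "g \<noteq> 0"
  proof
    assume "g = 0"
    hence "coeff g q = 0" by simp
    thus False using q2 by (simp add: g_def coeff_pCons split: nat.splits)
  qed
  have degg: "degree g \<le> q"
    unfolding g_def using q2
    by (intro degree_diff_le) (auto simp: degree_monom_le degree_pCons_eq_if)
  have Froots: "F = {x. poly g x = 0}" by (auto simp: F_def subfield_q_def polyg)
  have le: "card F \<le> q" using card_poly_roots_bound[OF g0] degg Froots by simp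
  define a where "a = (\<Sum>i<t. q ^ i)"
  have qa: "(q - 1) * a = q ^ t - 1"
  proof -
    have "(int q - 1) * (\<Sum>i<t. int q ^ i) = int q ^ t - 1"
      by (simp add: power_diff_1_eq)
    moreover have "int ((q - 1) * a) = (int q - 1) * (\<Sum>i<t. int q ^ i)"
      using q2 by (simp add: a_def of_nat_diff)
    moreover have "int (q ^ t - 1) = int q ^ t - 1"
      using q2 by (simp add: of_nat_diff)
    ultimately show ?thesis by linarith
  qed
  have a1: "a \<ge> 1"
  proof -
    have "q ^ 0 \<le> a" unfolding a_def using t by (intro member_le_sum) auto
    thus ?thesis by simp
  qed
  define h :: "'a poly" where "h = (\<Sum>i<a. monom 1 (i * (q - 1)))"
  have polyh: "poly h x = (\<Sum>i<a. (x ^ (q - 1)) ^ i)" for x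
    unfolding h_def poly_sum poly_monom
    by (rule sum.cong) (auto simp flip: power_mult simp: mult.commute)
  have coeffh: "coeff h 0 = 1"
  proof -
    have "coeff h 0 = (\<Sum>i<a. if i = 0 then 1 else 0)"
      unfolding h_def coeff_sum using q2 by (intro sum.cong) (auto simp: coeff_monom)
    also have "\<dots> = 1" using a1 by (simp add: sum.delta)
    finally show ?thesis .
  qed
  have h0: "h \<noteq> 0" using coeffh by auto
  have degh: "degree h \<le> (a - 1) * (q - 1)"
    unfolding h_def
  proof (intro degree_sum_le)
    fix i assume "i \<in> {..<a}"
    hence "i \<le> a - 1" by auto
    hence "i * (q - 1) \<le> (a - 1) * (q - 1)" by (rule mult_right_mono) simp
    thus "degree (monom (1::'a) (i * (q - 1))) \<le> (a - 1) * (q - 1)"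
      using degree_monom_le order.trans by blast
  qed simp
  have cover: "UNIV \<subseteq> F \<union> {x. poly h x = 0}"
  proof
    fix x :: 'a
    show "x \<in> F \<union> {x. poly h x = 0}"
    proof (cases "x ^ q = x")
      case True thus ?thesis by (simp add: F_def subfield_q_def)
    next
      case False
      hence x0: "x \<noteq> 0" using q2 by auto
      define y where "y = x ^ (q - 1)"
      have y1: "y \<noteq> 1"
      proof
        assume "y = 1"
        hence "x * x ^ (q - 1) = x" unfolding y_def by simp
        moreover have "x * x ^ (q - 1) = x ^ q" using q2
          by (metis Suc_diff_1 less_le_trans pos2 power_Suc)
        ultimately have "x ^ q = x" by metis
        thus False using False by simp
      qed
      have "x ^ CARD('a) = x" by (rule ff_power_card)
      moreover have "x * x ^ (q ^ t - 1) = x ^ CARD('a)"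
      proof -
        have "q ^ t > 0" using q2 by simp
        thus ?thesis using card by (metis Suc_diff_1 power_Suc)
      qed
      ultimately have "x * x ^ (q ^ t - 1) = x * 1" by simp
      hence "x ^ (q ^ t - 1) = 1" using x0 by simp
      hence ya: "y ^ a = 1" unfolding y_def using qa by (simp flip: power_mult)
      have "(y - 1) * (\<Sum>i<a. y ^ i) = y ^ a - 1" by (simp add: power_diff_1_eq)
      hence "(\<Sum>i<a. y ^ i) = 0" using ya y1 by simp
      thus ?thesis by (simp add: polyh y_def)
    qed
  qed
  have "CARD('a) \<le> card (F \<union> {x. poly h x = 0})" using cover by (intro card_mono) auto
  also have "\<dots> \<le> card F + card {x. poly h x = 0}" by (rule card_Un_le)
  also have "\<dots> \<le> card F + (a - 1) * (q - 1)"
    using card_poly_roots_bound[OF h0] degh by simp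
  finally have "q ^ t \<le> card F + (a - 1) * (q - 1)" using card by simp
  moreover have "(a - 1) * (q - 1) = q ^ t - q"
  proof -
    have "(a - 1) * (q - 1) = (q - 1) * a - (q - 1)" by (metis mult.commute diff_mult_distrib2 mult_1_right)
    also have "\<dots> = q ^ t - q" using qa q2 by simp
    finally show ?thesis .
  qed
  moreover have "q ^ 1 \<le> q ^ t" using t q2 by (intro power_increasing) auto
  ultimately have "card F \<ge> q" by simp
  with le show "card (subfield_q q :: 'a set) = q" by (simp add: F_def)
qed




definition subsp :: "'a::field set \<Rightarrow> ('a ^ 'n) set \<Rightarrow> bool" where
  "subsp F S \<longleftrightarrow> 0 \<in> S \<and> (\<forall>x\<in>S. \<forall>y\<in>S. x + y \<in> S) \<and> (\<forall>c\<in>F. \<forall>x\<in>S. c *s x \<in> S)"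

definition sumset :: "'a::ab_group_add set \<Rightarrow> 'a set \<Rightarrow> 'a set" where
  "sumset A B = {a + b | a b. a \<in> A \<and> b \<in> B}"

definition subgrp :: "'a::ab_group_add set \<Rightarrow> bool" where
  "subgrp A \<longleftrightarrow> 0 \<in> A \<and> (\<forall>x\<in>A. \<forall>y\<in>A. x + y \<in> A) \<and> (\<forall>x\<in>A. - x \<in> A)"

lemma subfldD:
  assumes "subfld F"
  shows "0 \<in> F" "1 \<in> F" "a \<in> F \<Longrightarrow> b \<in> F \<Longrightarrow> a + b \<in> F" "a \<in> F \<Longrightarrow> b \<in> F \<Longrightarrow> a * b \<in> F"
    "a \<in> F \<Longrightarrow> - a \<in> F" "a \<in> F \<Longrightarrow> inverse a \<in> F"
  using assms unfolding subfld_def by auto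

lemma subfld_UNIV: "subfld UNIV" by (simp add: subfld_def)

lemma subspD:
  assumes "subsp F S"
  shows "0 \<in> S" "x \<in> S \<Longrightarrow> y \<in> S \<Longrightarrow> x + y \<in> S" "c \<in> F \<Longrightarrow> x \<in> S \<Longrightarrow> c *s x \<in> S"
  using assms unfolding subsp_def by auto

lemma subsp_neg:
  assumes "subfld F" "subsp F S" "x \<in> S" shows "- x \<in> S"
proof -
  have "(-1) *s x \<in> S" using subspD(3)[OF assms(2) subfldD(5)[OF assms(1) subfldD(2)[OF assms(1)]] assms(3)] .
  thus ?thesis by (simp only: vector_sneg_minus1[of x])
qed

lemma subsp_diff:
  assumes "subfld F" "subsp F S" "x \<in> S" "y \<in> S" shows "x - y \<in> S"
proof -
  have "x + - y \<in> S" using subspD(2)[OF assms(2) assms(3) subsp_neg[OF assms(1,2,4)]] .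
  thus ?thesis by (simp only: diff_conv_add_uminus)
qed

lemma subsp_subgrp: "subfld F \<Longrightarrow> subsp F S \<Longrightarrow> subgrp S"
  unfolding subgrp_def using subsp_neg[of F S] subspD[of F S] by blast

lemma subsp_UNIV_F: "subsp UNIV S \<Longrightarrow> subsp F S"
  unfolding subsp_def by auto

lemma subsp_sum:
  assumes "subsp F S" "\<And>v. v \<in> Y \<Longrightarrow> f v \<in> S"
  shows "sum f Y \<in> S"
  using assms(2)
proof (induct Y rule: infinite_finite_induct)
  case (infinite A) thus ?case using subspD(1)[OF assms(1)] by simp
next
  case empty thus ?case using subspD(1)[OF assms(1)] by simp
next
  case (insert x F) thus ?case using subspD(2)[OF assms(1)] by simp
qed

lemma smult_sum: "(c::'a::field) *s sum f Y = sum (\<lambda>v. c *s f v) Y"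
  by (induct Y rule: infinite_finite_induct) (auto simp: vector_add_ldistrib)

lemma sum_if_restrict:
  assumes "finite Y" "Y1 \<subseteq> Y"
  shows "(\<Sum>v\<in>Y. (if v \<in> Y1 then c v else 0) *s v) = (\<Sum>v\<in>Y1. c v *s (v::'a::field^'n))"
  by (rule sum.mono_neutral_cong_right) (use assms in auto)

lemma span_over_sub:
  assumes "subfld F" shows "subsp F (span_over F X)"
  unfolding subsp_def
proof (intro conjI ballI)
  show "0 \<in> span_over F X" unfolding span_over_def
    by (rule CollectI, rule exI[of _ "{}"]) auto
next
  fix x y assume "x \<in> span_over F X" "y \<in> span_over F X"
  then obtain Y1 c1 Y2 c2 where 1: "finite Y1" "Y1 \<subseteq> X" "\<forall>v\<in>Y1. c1 v \<in> F" "x = (\<Sum>v\<in>Y1. c1 v *s v)"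
    and 2: "finite Y2" "Y2 \<subseteq> X" "\<forall>v\<in>Y2. c2 v \<in> F" "y = (\<Sum>v\<in>Y2. c2 v *s v)"
    unfolding span_over_def by blast
  define c where "c v = (if v \<in> Y1 then c1 v else 0) + (if v \<in> Y2 then c2 v else 0)" for v
  have "x + y = (\<Sum>v\<in>Y1 \<union> Y2. c v *s v)"
    unfolding c_def vector_sadd_rdistrib sum.distrib
    using sum_if_restrict[of "Y1 \<union> Y2" Y1 c1] sum_if_restrict[of "Y1 \<union> Y2" Y2 c2] 1 2 by simp
  moreover have "\<forall>v\<in>Y1 \<union> Y2. c v \<in> F"
    using 1 2 subfldD[OF assms] unfolding c_def by auto
  ultimately show "x + y \<in> span_over F X" unfolding span_over_def using 1 2
    by (intro CollectI exI[of _ "Y1 \<union> Y2"] exI[of _ c]) auto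
next
  fix d x assume d: "d \<in> F" and "x \<in> span_over F X"
  then obtain Y c where 1: "finite Y" "Y \<subseteq> X" "\<forall>v\<in>Y. c v \<in> F" "x = (\<Sum>v\<in>Y. c v *s v)"
    unfolding span_over_def by blast
  have "d *s x = (\<Sum>v\<in>Y. (d * c v) *s v)" using 1 by (simp add: smult_sum vector_smult_assoc)
  thus "d *s x \<in> span_over F X" unfolding span_over_def using 1 d subfldD[OF assms]
    by (intro CollectI exI[of _ Y] exI[of _ "\<lambda>v. d * c v"]) auto
qed

lemma span_over_least:
  assumes "subsp F S" "X \<subseteq> S" shows "span_over F X \<subseteq> S"
proof
  fix x assume "x \<in> span_over F X"
  then obtain Y c where 1: "finite Y" "Y \<subseteq> X" "\<forall>v\<in>Y. c v \<in> F" "x = (\<Sum>v\<in>Y. c v *s v)"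
    unfolding span_over_def by blast
  show "x \<in> S" unfolding 1(4) using 1 assms by (intro subsp_sum[OF assms(1)]) (auto intro: subspD)
qed

lemma span_over_inc:
  assumes "1 \<in> F" shows "X \<subseteq> span_over F X"
proof
  fix x assume "x \<in> X"
  thus "x \<in> span_over F X" unfolding span_over_def using assms
    by (intro CollectI exI[of _ "{x}"] exI[of _ "\<lambda>_. 1"]) auto
qed

lemma span_over_mono: "X \<subseteq> X' \<Longrightarrow> span_over F X \<subseteq> span_over F X'"
  unfolding span_over_def by blast

lemma span_over_mono_F: "F \<subseteq> F' \<Longrightarrow> span_over F X \<subseteq> span_over F' X"
  unfolding span_over_def by blast

lemma span_over_empty: "span_over F {} = {0}"
  unfolding span_over_def by auto

lemma span_over_insert:
  assumes F: "subfld F"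
  shows "span_over F (insert v B) = {z + c *s v | z c. z \<in> span_over F B \<and> c \<in> F}"
proof
  show "{z + c *s v | z c. z \<in> span_over F B \<and> c \<in> F} \<subseteq> span_over F (insert v B)"
  proof clarify
    fix z c assume z: "z \<in> span_over F B" and c: "c \<in> F"
    have s: "subsp F (span_over F (insert v B))" by (rule span_over_sub[OF F])
    have "z \<in> span_over F (insert v B)" using z span_over_mono[of B "insert v B" F] by auto
    moreover have "v \<in> span_over F (insert v B)" using span_over_inc[OF subfldD(2)[OF F], of "insert v B"] by auto
    ultimately show "z + c *s v \<in> span_over F (insert v B)" using subspD(2)[OF s] subspD(3)[OF s c] by blast
  qed
next
  show "span_over F (insert v B) \<subseteq> {z + c *s v | z c. z \<in> span_over F B \<and> c \<in> F}"
  proof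
    fix x assume "x \<in> span_over F (insert v B)"
    then obtain Y c where 1: "finite Y" "Y \<subseteq> insert v B" "\<forall>v\<in>Y. c v \<in> F" "x = (\<Sum>v\<in>Y. c v *s v)"
      unfolding span_over_def by blast
    have YB: "Y - {v} \<subseteq> B" using 1 by auto
    have zin: "(\<Sum>w\<in>Y - {v}. c w *s w) \<in> span_over F B"
      unfolding span_over_def using 1 YB by (intro CollectI exI[of _ "Y - {v}"] exI[of _ c]) auto
    show "x \<in> {z + c *s v | z c. z \<in> span_over F B \<and> c \<in> F}"
    proof (cases "v \<in> Y")
      case True
      hence "x = c v *s v + (\<Sum>w\<in>Y - {v}. c w *s w)" using 1 sum.remove[of Y v "\<lambda>w. c w *s w"] by simp
      hence "x = (\<Sum>w\<in>Y - {v}. c w *s w) + c v *s v" by (simp add: add.commute)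
      thus ?thesis using zin 1 True by blast
    next
      case False
      hence "x = (\<Sum>w\<in>Y - {v}. c w *s w) + 0 *s v" using 1 by simp
      thus ?thesis using zin subfldD(1)[OF F] by blast
    qed
  qed
qed

lemma span_over_single:
  assumes F: "subfld F" shows "span_over F {v} = {c *s v | c. c \<in> F}"
  using span_over_insert[OF F, of v "{}"] by (auto simp: span_over_empty)

lemma indep_over_subset: "indep_over F B \<Longrightarrow> A \<subseteq> B \<Longrightarrow> indep_over F A"
  unfolding indep_over_def by blast

lemma indep_over_insert:
  assumes F: "subfld F" and B: "indep_over F B" and v: "v \<notin> span_over F B"
  shows "indep_over F (insert v B)"
  unfolding indep_over_def
proof (intro allI impI ballI)
  fix Y c w
  assume H: "finite Y \<and> Y \<subseteq> insert v B \<and> (\<forall>v\<in>Y. c v \<in> F) \<and> (\<Sum>v\<in>Y. c v *s v) = 0" and w: "w \<in> Y"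
  have vB: "v \<notin> B" using v span_over_inc[OF subfldD(2)[OF F]] by auto
  have YB: "Y - {v} \<subseteq> B" using H by auto
  have zin: "(\<Sum>w\<in>Y - {v}. c w *s w) \<in> span_over F B"
    unfolding span_over_def using H YB by (intro CollectI exI[of _ "Y - {v}"] exI[of _ c]) auto
  have cv: "v \<in> Y \<Longrightarrow> c v = 0"
  proof (rule ccontr)
    assume vY: "v \<in> Y" and cv: "c v \<noteq> 0"
    hence "c v *s v + (\<Sum>w\<in>Y - {v}. c w *s w) = 0" using H sum.remove[of Y v "\<lambda>w. c w *s w"] by simp
    hence "c v *s v = - (\<Sum>w\<in>Y - {v}. c w *s w)" by (simp add: eq_neg_iff_add_eq_0)
    hence "inverse (c v) *s (c v *s v) = (- inverse (c v)) *s (\<Sum>w\<in>Y - {v}. c w *s w)"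
      by (simp add: vector_smult_rneg vector_smult_lneg)
    hence vdef: "v = (- inverse (c v)) *s (\<Sum>w\<in>Y - {v}. c w *s w)" using cv by (simp add: vector_smult_assoc)
    have neg: "- inverse (c v) \<in> F" using H vY subfldD(5,6)[OF F] by blast
    have mem: "(- inverse (c v)) *s (\<Sum>w\<in>Y - {v}. c w *s w) \<in> span_over F B"
      by (rule subspD(3)[OF span_over_sub[OF F] neg zin])
    have "v \<in> span_over F B" by (subst vdef) (rule mem)
    thus False using v by simp
  qed
  have rest: "(\<Sum>w\<in>Y - {v}. c w *s w) = 0"
  proof (cases "v \<in> Y")
    case True thus ?thesis using H cv sum.remove[of Y v "\<lambda>w. c w *s w"] by simp
  next
    case False thus ?thesis using H by simp
  qed
  show "c w = 0"
  proof (cases "w = v")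
    case True thus ?thesis using cv w by simp
  next
    case False
    have "\<forall>u\<in>Y - {v}. c u = 0"
      using B[unfolded indep_over_def, rule_format, of "Y - {v}" c] rest H YB by auto
    thus ?thesis using False w by blast
  qed
qed

lemma indep_over_single:
  assumes "1 \<in> F" shows "indep_over F {v} \<longleftrightarrow> v \<noteq> 0"
proof
  assume I: "indep_over F {v}"
  show "v \<noteq> 0"
  proof
    assume v0: "v = 0"
    have "finite {v} \<and> {v} \<subseteq> {v} \<and> (\<forall>w\<in>{v}. (\<lambda>_. 1::'a) w \<in> F) \<and> (\<Sum>w\<in>{v}. (\<lambda>_. 1::'a) w *s w) = 0"
      using assms v0 by simp
    hence "\<forall>w\<in>{v}. (\<lambda>_. 1::'a) w = 0" using I[unfolded indep_over_def, rule_format, of "{v}" "\<lambda>_. 1"] by blast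
    thus False by simp
  qed
next
  assume v: "v \<noteq> 0"
  show "indep_over F {v}" unfolding indep_over_def
  proof (intro allI impI ballI)
    fix Y c w assume H: "finite Y \<and> Y \<subseteq> {v} \<and> (\<forall>v\<in>Y. c v \<in> F) \<and> (\<Sum>v\<in>Y. c v *s v) = 0" and w: "w \<in> Y"
    hence "Y = {v}" "w = v" by auto
    thus "c w = 0" using H v by simp
  qed
qed

lemma card_span_over:
  fixes B :: "('a::field ^ 'n) set"
  assumes F: "subfld F" and fF: "finite F" and fB: "finite B" and ind: "indep_over F B"
  shows "card (span_over F B) = card F ^ card B"
proof -
  define f where "f c = (\<Sum>v\<in>B. c v *s v)" for c :: "'a ^ 'n \<Rightarrow> 'a"
  have "bij_betw f (PiE B (\<lambda>_. F)) (span_over F B)"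
  proof (rule bij_betw_imageI)
    show "inj_on f (PiE B (\<lambda>_. F))"
    proof (rule inj_onI)
      fix c d assume c: "c \<in> PiE B (\<lambda>_. F)" and d: "d \<in> PiE B (\<lambda>_. F)" and e: "f c = f d"
      have "(\<Sum>v\<in>B. (c v - d v) *s v) = f c - f d" unfolding f_def
        by (simp add: vector_sub_rdistrib sum_subtractf)
      hence "(\<Sum>v\<in>B. (c v - d v) *s v) = 0" using e by simp
      moreover have "\<forall>v\<in>B. c v - d v \<in> F"
      proof
        fix v assume "v \<in> B"
        hence "c v \<in> F" "d v \<in> F" using c d by auto
        hence "c v + - d v \<in> F" using subfldD(3,5)[OF F] by blast
        thus "c v - d v \<in> F" by (simp only: diff_conv_add_uminus)
      qed
      ultimately have "\<forall>v\<in>B. c v - d v = 0"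
        using ind[unfolded indep_over_def, rule_format, of B "\<lambda>v. c v - d v"] fB by simp
      hence "\<And>v. v \<in> B \<Longrightarrow> c v = d v" by simp
      thus "c = d" by (rule PiE_ext[OF c d])
    qed
  next
    show "f ` PiE B (\<lambda>_. F) = span_over F B"
    proof
      show "f ` PiE B (\<lambda>_. F) \<subseteq> span_over F B"
      proof
        fix x assume "x \<in> f ` PiE B (\<lambda>_. F)"
        then obtain c where c: "c \<in> PiE B (\<lambda>_. F)" "x = f c" by blast
        have cF: "\<forall>v\<in>B. c v \<in> F" using c by (simp add: PiE_iff)
        show "x \<in> span_over F B" unfolding span_over_def c(2) f_def
          by (rule CollectI, rule exI[of _ B], rule exI[of _ c]) (use fB cF in simp)
      qed
    next
      show "span_over F B \<subseteq> f ` PiE B (\<lambda>_. F)"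
      proof
        fix x assume "x \<in> span_over F B"
        then obtain Y c where 1: "finite Y" "Y \<subseteq> B" "\<forall>v\<in>Y. c v \<in> F" "x = (\<Sum>v\<in>Y. c v *s v)"
          unfolding span_over_def by blast
        define c' where "c' = restrict (\<lambda>v. if v \<in> Y then c v else 0) B"
        have "c' \<in> PiE B (\<lambda>_. F)" using 1 subfldD(1)[OF F] unfolding c'_def by auto
        moreover have "f c' = x" unfolding f_def c'_def 1(4)
          using sum_if_restrict[OF fB 1(2), of c] by simp
        ultimately show "x \<in> f ` PiE B (\<lambda>_. F)" by (metis image_eqI)
      qed
    qed
  qed
  hence "card (span_over F B) = card (PiE B (\<lambda>_. F))" by (simp add: bij_betw_same_card)
  also have "\<dots> = card F ^ card B" using fB by (simp add: card_PiE)
  finally show ?thesis .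
qed

lemma vsub_D:
  assumes F: "subfld F" "finite F" and v: "vsub F d S"
  shows "subsp F S" "card S = card F ^ d"
  using v span_over_sub[OF F(1)] card_span_over[OF F] unfolding vsub_def by auto

lemma vsub_I:
  "finite B \<Longrightarrow> indep_over F B \<Longrightarrow> card B = d \<Longrightarrow> vsub F d (span_over F B)"
  unfolding vsub_def by blast

lemma vsub1_D:
  assumes F: "subfld F" and v: "vsub F 1 P"
  obtains p where "p \<noteq> 0" "P = span_over F {p}"
proof -
  obtain B where B: "finite B" "card B = 1" "indep_over F B" "span_over F B = P"
    using v unfolding vsub_def by blast
  then obtain p where "B = {p}" by (metis card_1_singletonE)
  thus ?thesis using that B indep_over_single[OF subfldD(2)[OF F]] by auto
qed

lemma vsub1_I:
  assumes F: "subfld F" and p: "p \<noteq> 0" shows "vsub F 1 (span_over F {p})"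
proof -
  have "indep_over F {p}" using indep_over_single[OF subfldD(2)[OF F], of p] p by blast
  thus ?thesis using vsub_I[of "{p}" F 1] by simp
qed

lemma sumset_iff: "x \<in> sumset A B \<longleftrightarrow> (\<exists>a\<in>A. \<exists>b\<in>B. x = a + b)"
  unfolding sumset_def by auto

lemma card_fibers:
  assumes "finite A"
  shows "card A = (\<Sum>b\<in>f ` A. card {a\<in>A. f a = b})"
proof -
  have "A = (\<Union>b\<in>f ` A. {a\<in>A. f a = b})" by auto
  hence "card A = card (\<Union>b\<in>f ` A. {a\<in>A. f a = b})" by simp
  also have "\<dots> = (\<Sum>b\<in>f ` A. card {a\<in>A. f a = b})"
    using assms by (intro card_UN_disjoint) auto
  finally show ?thesis .
qed

lemma card_fibers_ge:
  assumes "finite A" "\<And>b. b \<in> f ` A \<Longrightarrow> m \<le> card {a\<in>A. f a = b}"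
  shows "m * card (f ` A) \<le> card A"
proof -
  have "m * card (f ` A) = (\<Sum>b\<in>f ` A. m)" by simp
  also have "\<dots> \<le> (\<Sum>b\<in>f ` A. card {a\<in>A. f a = b})" by (rule sum_mono) (use assms in auto)
  also have "\<dots> = card A" using card_fibers[OF assms(1), of f] by simp
  finally show ?thesis .
qed

lemma prod_formula:
  fixes A B :: "'a::ab_group_add set"
  assumes fA: "finite A" and fB: "finite B" and gA: "subgrp A" and gB: "subgrp B"
  shows "card (sumset A B) * card (A \<inter> B) = card A * card B"
proof -
  define f where "f = (\<lambda>(a, b). a + (b::'a))"
  have img: "f ` (A \<times> B) = sumset A B" unfolding f_def sumset_def by auto
  have fib: "card {ab\<in>A \<times> B. f ab = x} = card (A \<inter> B)" if x: "x \<in> sumset A B" for x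
  proof -
    obtain a0 b0 where ab0: "a0 \<in> A" "b0 \<in> B" "x = a0 + b0" using x unfolding sumset_def by auto
    have "bij_betw (\<lambda>c. (a0 + c, b0 - c)) (A \<inter> B) {ab\<in>A \<times> B. f ab = x}"
    proof (rule bij_betwI[where g = "\<lambda>(a, b). a - a0"])
      show "(\<lambda>c. (a0 + c, b0 - c)) \<in> A \<inter> B \<rightarrow> {ab \<in> A \<times> B. f ab = x}"
      proof
        fix c assume c: "c \<in> A \<inter> B"
        have "a0 + c \<in> A" using gA ab0 c unfolding subgrp_def by blast
        moreover have "b0 - c \<in> B" using gB ab0 c unfolding subgrp_def diff_conv_add_uminus by blast
        ultimately show "(a0 + c, b0 - c) \<in> {ab \<in> A \<times> B. f ab = x}" using ab0 unfolding f_def by simp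
      qed
      show "(\<lambda>(a, b). a - a0) \<in> {ab \<in> A \<times> B. f ab = x} \<rightarrow> A \<inter> B"
      proof
        fix ab assume "ab \<in> {ab \<in> A \<times> B. f ab = x}"
        then obtain a b where "ab = (a, b)" "a \<in> A" "b \<in> B" "a + b = a0 + b0" unfolding f_def ab0 by auto
        moreover have "a - a0 = b0 - b" using calculation(4) by (simp add: algebra_simps)
        moreover have "a - a0 \<in> A" using gA ab0 calculation unfolding subgrp_def diff_conv_add_uminus by blast
        moreover have "b0 - b \<in> B" using gB ab0 calculation unfolding subgrp_def diff_conv_add_uminus by blast
        ultimately show "(\<lambda>(a, b). a - a0) ab \<in> A \<inter> B" by simp
      qed
      show "\<And>c. c \<in> A \<inter> B \<Longrightarrow> (\<lambda>(a, b). a - a0) (a0 + c, b0 - c) = c" by simp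
      show "\<And>ab. ab \<in> {ab \<in> A \<times> B. f ab = x} \<Longrightarrow> (a0 + (\<lambda>(a, b). a - a0) ab, b0 - (\<lambda>(a, b). a - a0) ab) = ab"
        unfolding f_def ab0 by (auto simp: algebra_simps)
    qed
    thus ?thesis by (simp add: bij_betw_same_card)
  qed
  have "card A * card B = card (A \<times> B)" by (simp add: card_cartesian_product)
  also have "\<dots> = (\<Sum>x\<in>f ` (A \<times> B). card {ab\<in>A \<times> B. f ab = x})"
    by (rule card_fibers) (use fA fB in simp)
  also have "\<dots> = (\<Sum>x\<in>sumset A B. card (A \<inter> B))" unfolding img using fib by simp
  finally show ?thesis by simp
qed

lemma sumset_subsp:
  assumes "subsp F A" "subsp F B" shows "subsp F (sumset A B)"
  unfolding subsp_def
proof (intro conjI ballI)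
  show "0 \<in> sumset A B" unfolding sumset_iff using subspD(1)[OF assms(1)] subspD(1)[OF assms(2)] by force
next
  fix x y assume "x \<in> sumset A B" "y \<in> sumset A B"
  then obtain a b a' b' where ab: "a \<in> A" "b \<in> B" "x = a + b" "a' \<in> A" "b' \<in> B" "y = a' + b'"
    unfolding sumset_iff by blast
  have "a + a' \<in> A" using subspD(2)[OF assms(1) ab(1,4)] .
  moreover have "b + b' \<in> B" using subspD(2)[OF assms(2) ab(2,5)] .
  moreover have "x + y = (a + a') + (b + b')" using ab by (simp add: algebra_simps)
  ultimately show "x + y \<in> sumset A B" unfolding sumset_iff by blast
next
  fix c x assume c: "c \<in> F" and "x \<in> sumset A B"
  then obtain a b where ab: "a \<in> A" "b \<in> B" "x = a + b" unfolding sumset_iff by blast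
  have "c *s a \<in> A" using subspD(3)[OF assms(1) c ab(1)] .
  moreover have "c *s b \<in> B" using subspD(3)[OF assms(2) c ab(2)] .
  moreover have "c *s x = c *s a + c *s b" using ab by (simp add: vector_add_ldistrib)
  ultimately show "c *s x \<in> sumset A B" unfolding sumset_iff by blast
qed

lemma sumset_sub1: "0 \<in> B \<Longrightarrow> A \<subseteq> sumset A B"
  unfolding sumset_def by force

lemma sumset_sub2: "0 \<in> A \<Longrightarrow> B \<subseteq> sumset A B"
  unfolding sumset_def by force

lemma sumset_least: "subsp F S \<Longrightarrow> A \<subseteq> S \<Longrightarrow> B \<subseteq> S \<Longrightarrow> sumset A B \<subseteq> S"
  unfolding sumset_def using subspD(2) by blast

lemma span_union:
  assumes F: "subfld F" and A: "subsp F A" and B: "subsp F B"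
  shows "span_over F (A \<union> B) = sumset A B"
proof
  show "span_over F (A \<union> B) \<subseteq> sumset A B"
    using span_over_least[OF sumset_subsp[OF A B]] sumset_sub1 sumset_sub2 subspD(1)[OF A] subspD(1)[OF B]
    by (metis Un_least)
next
  show "sumset A B \<subseteq> span_over F (A \<union> B)"
    using sumset_least[OF span_over_sub[OF F]] span_over_inc[OF subfldD(2)[OF F]] by (metis le_supE)
qed

lemma card_line:
  fixes y :: "'a::{field,finite} ^ 'n"
  assumes F: "subfld F" and y: "y \<noteq> 0"
  shows "card (span_over F {y}) = card F"
proof -
  have "span_over F {y} = (\<lambda>c. c *s y) ` F" using span_over_single[OF F] by auto
  moreover have "inj_on (\<lambda>c. c *s y) F" using y by (auto intro: inj_onI)
  ultimately show ?thesis by (simp add: card_image)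
qed

lemma card_sumset_dir:
  fixes H :: "('a::{field,finite} ^ 'n) set"
  assumes F: "subfld F" and H: "subsp F H" and y: "y \<notin> H"
  shows "card (sumset H (span_over F {y})) = card F * card H"
proof -
  have y0: "y \<noteq> 0" using y subspD(1)[OF H] by auto
  have int: "H \<inter> span_over F {y} = {0}"
  proof
    show "H \<inter> span_over F {y} \<subseteq> {0}"
    proof
      fix x assume "x \<in> H \<inter> span_over F {y}"
      hence xH: "x \<in> H" and "x \<in> {c *s y | c. c \<in> F}" using span_over_single[OF F, of y] by auto
      then obtain c where c: "c \<in> F" "x = c *s y" by blast
      show "x \<in> {0}"
      proof (cases "c = 0")
        case True thus ?thesis using c by simp
      next
        case False
        have "inverse c *s x \<in> H" using subspD(3)[OF H subfldD(6)[OF F c(1)] xH] .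
        hence "y \<in> H" using False c by (simp add: vector_smult_assoc)
        thus ?thesis using y by simp
      qed
    qed
  next
    show "{0} \<subseteq> H \<inter> span_over F {y}"
      using subspD(1)[OF H] subspD(1)[OF span_over_sub[OF F]] by auto
  qed
  have "card (sumset H (span_over F {y})) * card (H \<inter> span_over F {y}) = card H * card (span_over F {y})"
    by (rule prod_formula) (auto intro: subsp_subgrp[OF F] H span_over_sub[OF F])
  thus ?thesis using int card_line[OF F y0] by simp
qed




lemma cancel_pos: "(a::nat) * c \<le> b * c \<Longrightarrow> c > 0 \<Longrightarrow> a \<le> b" by simp

lemma subsp_Int: "subsp F A \<Longrightarrow> subsp F B \<Longrightarrow> subsp F (A \<inter> B)"
  unfolding subsp_def by auto

lemma PF_le:
  fixes A B :: "('a::{field,finite} ^ 'n) set"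
  assumes F: "subfld F" and A: "subsp F A" and B: "subsp F B" and C: "sumset A B \<subseteq> C"
  shows "card A * card B \<le> card (A \<inter> B) * card C"
proof -
  have "card (sumset A B) * card (A \<inter> B) = card A * card B"
    by (rule prod_formula) (auto intro: subsp_subgrp[OF F] A B)
  moreover have "card (sumset A B) \<le> card C" using C by (simp add: card_mono)
  ultimately show ?thesis by (metis mult.commute mult_le_mono1)
qed

lemma dir_le:
  fixes A N :: "('a::{field,finite} ^ 'n) set"
  assumes F: "subfld F" and A: "subsp F A" and N: "subsp F N" and AN: "A \<subseteq> N" and y: "y \<in> N" "y \<notin> A"
  shows "card F * card A \<le> card N"
proof -
  have "sumset A (span_over F {y}) \<subseteq> N"
    using sumset_least[OF N AN] span_over_least[OF N] y by auto
  hence "card (sumset A (span_over F {y})) \<le> card N" by (simp add: card_mono)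
  thus ?thesis using card_sumset_dir[OF F A y(2)] by simp
qed

lemma subsp_card_eq:
  fixes A N :: "('a::{field,finite} ^ 'n) set"
  assumes "A \<subseteq> N" "card N \<le> card A" shows "A = N"
  using assms by (metis card_seteq finite)

locale setting =
  fixes q t k E :: nat and Fq :: "'a::{field,finite} set"
    and \<Omega> \<Gamma> :: "('a ^ 'n) set" and Bb :: "('a ^ 'n) set set"
  assumes E_def: "E = CARD('n) * t - k * t"
    and Fq: "subfld Fq" and cardFq: "card Fq = q" and q2: "q \<ge> 2"
    and t: "t > 0" and k: "k > 0" "k < CARD('n)"
    and cardA: "CARD('a) = q ^ t"
    and \<Omega>v: "vsub Fq (CARD('n) * t - k * t - 1) \<Omega>"
    and \<Gamma>v: "vsub Fq 3 \<Gamma>"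
    and skew: "\<Gamma> \<inter> \<Omega> = {0}"
    and minB: "minimal_blocking {P \<in> proj_points Fq. P \<subseteq> \<Gamma>}
                 {L. vsub Fq 2 L \<and> L \<subseteq> \<Gamma>} Bb"
    and tang: "\<forall>P\<in>Bb. card {L. vsub Fq 2 L \<and> L \<subseteq> \<Gamma> \<and> P \<subseteq> L
                              \<and> card {R\<in>Bb. R \<subseteq> L} = 1} \<ge> 2"
begin


definition "S = sumset \<Gamma> \<Omega>"
definition "KV = (\<Union>P\<in>Bb. sumset P \<Omega>)"

lemma finFq: "finite Fq" by simp

lemma E_ge: "E \<ge> t"
proof -
  have "k + 1 \<le> CARD('n)" using k by simp
  hence "(k + 1) * t \<le> CARD('n) * t" by (rule mult_right_mono) simp
  thus ?thesis by (simp add: algebra_simps E_def)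
qed

lemma nt_eq: "CARD('n) * t = k * t + E"
proof -
  have "k * t \<le> CARD('n) * t" using k by simp
  thus ?thesis by (simp add: E_def)
qed

lemma vsubD: "vsub Fq d (X :: ('a ^ 'n) set) \<Longrightarrow> subsp Fq X \<and> card X = q ^ d"
  using vsub_D[OF Fq finFq] cardFq by auto

lemma vsubU: "vsub (UNIV :: 'a set) d (X :: ('a ^ 'n) set) \<Longrightarrow> subsp UNIV X \<and> card X = q ^ (t * d)"
  using vsub_D[OF subfld_UNIV, of d X] cardA by (simp add: power_mult)

lemma UNIV_sub: "subsp UNIV (X :: ('a ^ 'n) set) \<Longrightarrow> subsp Fq X"
  by (rule subsp_UNIV_F)

lemma cardV: "card (UNIV :: ('a ^ 'n) set) = q ^ (k * t + E)"
proof -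
  have "card (UNIV :: ('a ^ 'n) set) = (q ^ t) ^ CARD('n)" using cardA by simp
  also have "\<dots> = q ^ (t * CARD('n))" by (simp add: power_mult)
  also have "t * CARD('n) = k * t + E" using nt_eq by (simp add: mult.commute)
  finally show ?thesis .
qed

lemma \<Omega>: "subsp Fq \<Omega>" "card \<Omega> = q ^ (E - 1)"
  using vsubD[OF \<Omega>v] by (auto simp: E_def)

lemma \<Gamma>: "subsp Fq \<Gamma>" "card \<Gamma> = q ^ 3"
  using vsubD[OF \<Gamma>v] by auto

lemma S_sub: "subsp Fq S"
  unfolding S_def by (rule sumset_subsp[OF \<Gamma>(1) \<Omega>(1)])

lemma card_S: "card S = q ^ (E + 2)"
proof -
  have "card S * card (\<Gamma> \<inter> \<Omega>) = card \<Gamma> * card \<Omega>" unfolding S_def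
    by (rule prod_formula) (auto intro: subsp_subgrp[OF Fq] \<Gamma>(1) \<Omega>(1))
  hence "card S = q ^ 3 * q ^ (E - 1)" using skew \<Gamma> \<Omega> by simp
  also have "\<dots> = q ^ (E + 2)" using E_ge t by (simp flip: power_add)
  finally show ?thesis .
qed

lemma \<Gamma>_S: "\<Gamma> \<subseteq> S" unfolding S_def using sumset_sub1 subspD(1)[OF \<Omega>(1)] by blast
lemma \<Omega>_S: "\<Omega> \<subseteq> S" unfolding S_def using sumset_sub2 subspD(1)[OF \<Gamma>(1)] by blast

lemma blockingB: "blocking {P \<in> proj_points Fq. P \<subseteq> \<Gamma>} {L. vsub Fq 2 L \<and> L \<subseteq> \<Gamma>} Bb"
  using minB unfolding minimal_blocking_def by blast

lemma Bb_point: "P \<in> Bb \<Longrightarrow> vsub Fq 1 P \<and> P \<subseteq> \<Gamma>"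
  using blockingB unfolding blocking_def proj_points_def by blast

lemma Bb_block: "vsub Fq 2 L \<Longrightarrow> L \<subseteq> \<Gamma> \<Longrightarrow> \<exists>P\<in>Bb. P \<subseteq> L"
  using blockingB unfolding blocking_def by blast

lemma Bb_sub: "P \<in> Bb \<Longrightarrow> subsp Fq P"
  using Bb_point vsubD by blast

lemma Bb_nonempty: "Bb \<noteq> {}"
proof -
  obtain B where B: "finite B" "card B = 3" "indep_over Fq B" "span_over Fq B = \<Gamma>"
    using \<Gamma>v unfolding vsub_def by blast
  obtain b1 b2 b3 where b: "B = {b1, b2, b3}" "b1 \<noteq> b2" using B(2) by (metis card_3_iff)
  have "vsub Fq 2 (span_over Fq {b1, b2})"
    by (rule vsub_I) (use b B indep_over_subset[OF B(3)] in auto)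
  moreover have "span_over Fq {b1, b2} \<subseteq> \<Gamma>" using B(4) b span_over_mono[of "{b1,b2}" B Fq] by auto
  ultimately show ?thesis using Bb_block by blast
qed

lemma sumsetPO: "P \<in> Bb \<Longrightarrow> span_over Fq (P \<union> \<Omega>) = sumset P \<Omega>"
  using span_union[OF Fq Bb_sub \<Omega>(1)] by blast

lemma mkX:
  assumes u: "u \<noteq> 0" "u \<in> W" and W: "subsp UNIV W" and P: "P \<in> Bb" and uP: "u \<in> sumset P \<Omega>"
  shows "\<exists>X\<in>spread_B (cone Fq \<Omega> Bb). X \<subseteq> W"
proof -
  define Q where "Q = span_over Fq {u}"
  define X where "X = span_over UNIV {u}"
  have Qp: "Q \<in> proj_points Fq" unfolding Q_def proj_points_def using vsub1_I[OF Fq u(1)] by simp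
  have "Q \<subseteq> sumset P \<Omega>" unfolding Q_def
    using span_over_least[OF sumset_subsp[OF Bb_sub[OF P] \<Omega>(1)]] uP by simp
  hence "Q \<in> cone Fq \<Omega> Bb" unfolding cone_def using Qp P sumsetPO[OF P] by blast
  moreover have "Q \<subseteq> X" unfolding Q_def X_def by (rule span_over_mono_F) simp
  moreover have "X \<in> proj_points UNIV" unfolding X_def proj_points_def using vsub1_I[OF subfld_UNIV u(1)] by simp
  ultimately have "X \<in> spread_B (cone Fq \<Omega> Bb)" unfolding spread_B_def by blast
  moreover have "X \<subseteq> W" unfolding X_def using span_over_least[OF W] u by simp
  ultimately show ?thesis by blast
qed

lemma blocking_part: "blocking (proj_points UNIV) {W. vsub UNIV k W} (spread_B (cone Fq \<Omega> Bb))"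
  unfolding blocking_def
proof (intro conjI ballI)
  show "spread_B (cone Fq \<Omega> Bb) \<subseteq> proj_points UNIV" unfolding spread_B_def by blast
next
  fix W :: "('a ^ 'n) set" assume "W \<in> {W. vsub UNIV k W}"
  hence WU: "subsp UNIV W" and cW: "card W = q ^ (t * k)" using vsubU[of k W] by auto
  have W: "subsp Fq W" using UNIV_sub[OF WU] .
  define U where "U = W \<inter> S"
  have U: "subsp Fq U" unfolding U_def by (rule subsp_Int[OF W S_sub])
  have "card W * card S \<le> card U * card (UNIV :: ('a^'n) set)"
    unfolding U_def by (rule PF_le[OF Fq W S_sub]) simp
  moreover have "card W * card S = q ^ 2 * q ^ (k * t + E)"
  proof -
    have "card W * card S = q ^ (t * k + (E + 2))" by (simp add: cW card_S power_add)
    also have "t * k + (E + 2) = 2 + (k * t + E)" by simp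
    also have "q ^ (2 + (k * t + E)) = q ^ 2 * q ^ (k * t + E)" by (simp only: power_add)
    finally show ?thesis .
  qed
  ultimately have "q ^ 2 * q ^ (k * t + E) \<le> card U * q ^ (k * t + E)" using cardV by simp
  hence cU: "q ^ 2 \<le> card U" by (rule cancel_pos) (use q2 in simp)
  show "\<exists>X\<in>spread_B (cone Fq \<Omega> Bb). X \<subseteq> W"
  proof (cases "\<exists>w\<in>W \<inter> \<Omega>. w \<noteq> 0")
    case True
    then obtain w where w: "w \<in> W" "w \<in> \<Omega>" "w \<noteq> 0" by blast
    obtain P where P: "P \<in> Bb" using Bb_nonempty by blast
    have "w \<in> sumset P \<Omega>" unfolding sumset_iff
      using subspD(1)[OF Bb_sub[OF P]] w by (intro bexI[of _ 0] bexI[of _ w]) auto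
    thus ?thesis using mkX[OF w(3) w(1) WU P] by blast
  next
    case False
    hence UO: "U \<inter> \<Omega> = {0}" unfolding U_def using subspD(1)[OF W] subspD(1)[OF S_sub] subspD(1)[OF \<Omega>(1)] by auto
    define U' where "U' = sumset U \<Omega>"
    have U': "subsp Fq U'" unfolding U'_def by (rule sumset_subsp[OF U \<Omega>(1)])
    have "card U' * card (U \<inter> \<Omega>) = card U * card \<Omega>" unfolding U'_def
      by (rule prod_formula) (auto intro: subsp_subgrp[OF Fq] U \<Omega>(1))
    hence cU': "card U' = card U * q ^ (E - 1)" using UO \<Omega>(2) by simp
    define G where "G = U' \<inter> \<Gamma>"
    have G: "subsp Fq G" unfolding G_def by (rule subsp_Int[OF U' \<Gamma>(1)])
    have U'S: "U' \<subseteq> S" unfolding U'_def U_def using sumset_least[OF S_sub _ \<Omega>_S] by blast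
    have "card U' * card \<Gamma> \<le> card G * card S"
      unfolding G_def by (rule PF_le[OF Fq U' \<Gamma>(1)]) (rule sumset_least[OF S_sub U'S \<Gamma>_S])
    hence "card U * (q ^ (E - 1) * q ^ 3) \<le> card G * q ^ (E + 2)"
      using cU' \<Gamma>(2) card_S by (simp add: mult.assoc)
    moreover have "q ^ (E - 1) * q ^ 3 = q ^ (E + 2)" using E_ge t by (simp flip: power_add)
    ultimately have "card U * q ^ (E + 2) \<le> card G * q ^ (E + 2)" by simp
    hence "card U \<le> card G" by (rule cancel_pos) (use q2 in simp)
    hence cG: "q ^ 2 \<le> card G" using cU by simp
    have "\<exists>a\<in>G. a \<noteq> 0"
    proof (rule ccontr)
      assume "\<not> ?thesis"
      hence "G \<subseteq> {0}" by auto
      hence "card G \<le> 1" by (simp add: card_mono[of "{0}", simplified])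
      moreover have "q ^ 2 \<ge> 4" using q2 by (metis power2_nat_le_eq_le power2_eq_square numeral_Bit0 mult_2 le_add2 order.trans numeral_le_iff semiring_norm(69) Suc_1)
      ultimately show False using cG by simp
    qed
    then obtain a where a: "a \<in> G" "a \<noteq> 0" by blast
    have "card (span_over Fq {a}) = q" using card_line[OF Fq a(2)] cardFq by simp
    moreover have "q < q ^ 2" using q2 by (simp add: power2_eq_square)
    ultimately have "\<not> G \<subseteq> span_over Fq {a}" using cG card_mono[of "span_over Fq {a}" G] by auto
    then obtain b where b: "b \<in> G" "b \<notin> span_over Fq {a}" by blast
    have ab: "b \<noteq> a" using b span_over_inc[OF subfldD(2)[OF Fq], of "{a}"] by auto
    have ind: "indep_over Fq (insert b {a})"
      by (rule indep_over_insert[OF Fq _ b(2)]) (use indep_over_single[OF subfldD(2)[OF Fq], of a] a(2) in blast)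
    have Lv: "vsub Fq 2 (span_over Fq {b, a})" by (rule vsub_I) (use ind ab in auto)
    have LG: "span_over Fq {b, a} \<subseteq> G" using span_over_least[OF G] a b by simp
    have "G \<subseteq> \<Gamma>" unfolding G_def by simp
    then obtain P where P: "P \<in> Bb" "P \<subseteq> span_over Fq {b, a}" using Bb_block[OF Lv] LG by blast
    obtain p where p: "p \<noteq> 0" "P = span_over Fq {p}" using vsub1_D[OF Fq] Bb_point[OF P(1)] by blast
    have pP: "p \<in> P" using p(2) span_over_inc[OF subfldD(2)[OF Fq], of "{p}"] by auto
    hence pG: "p \<in> G" using P LG by auto
    hence "p \<in> U'" "p \<in> \<Gamma>" unfolding G_def by auto
    then obtain u \<omega> where u: "u \<in> U" "\<omega> \<in> \<Omega>" "p = u + \<omega>" unfolding U'_def sumset_iff by blast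
    have u0: "u \<noteq> 0"
    proof
      assume "u = 0"
      hence "p \<in> \<Omega>" using u by simp
      thus False using skew \<open>p \<in> \<Gamma>\<close> p(1) by auto
    qed
    have "u = p + - \<omega>" using u by (simp add: algebra_simps)
    hence "u \<in> sumset P \<Omega>" unfolding sumset_iff using pP subsp_neg[OF Fq \<Omega>(1) u(2)] by blast
    moreover have "u \<in> W" using u(1) unfolding U_def by simp
    ultimately show ?thesis using mkX[OF u0 _ WU P(1)] by blast
  qed
qed

end



lemma line_eq:
  fixes x u :: "'a::{field,finite} ^ 'n"
  assumes F: "subfld F" and u: "u \<in> span_over F {x}" "u \<noteq> 0"
  shows "span_over F {x} = span_over F {u}"
proof -
  have x0: "x \<noteq> 0" using u span_over_single[OF F, of x] by auto
  have "span_over F {u} \<subseteq> span_over F {x}"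
    by (rule span_over_least[OF span_over_sub[OF F]]) (use u in simp)
  moreover have "card (span_over F {x}) \<le> card (span_over F {u})"
    using card_line[OF F x0] card_line[OF F u(2)] by simp
  ultimately show ?thesis using subsp_card_eq by blast
qed

lemma card_ge2_obtain:
  assumes "2 \<le> card A"
  obtains a b where "a \<in> A" "b \<in> A" "a \<noteq> b"
proof -
  have fA: "finite A" using assms card.infinite by fastforce
  have "A \<noteq> {}" using assms by auto
  then obtain a where a: "a \<in> A" by blast
  have "card (A - {a}) = card A - 1" using fA a by (simp add: card_Diff_singleton)
  hence "card (A - {a}) \<ge> 1" using assms by simp
  hence "A - {a} \<noteq> {}" by (metis card.empty not_one_le_zero)
  then obtain b where "b \<in> A - {a}" by blast
  thus ?thesis using that a by auto
qed

lemma arith1: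
  fixes q A B :: nat
  assumes "q \<ge> 2" "A \<ge> q" "B \<ge> 1"
  shows "(A - 1) * (B - 1) < (q - 1) * (A * B - 1)"
proof -
  have AB: "A * B \<ge> 1" using assms by (metis le_trans mult_le_mono one_le_numeral mult_1)
  have i1: "int ((A - 1) * (B - 1)) = (int A - 1) * (int B - 1)" using assms by (simp add: of_nat_diff)
  have i2: "int ((q - 1) * (A * B - 1)) = (int q - 1) * (int A * int B - 1)" using assms AB by (simp add: of_nat_diff)
  have e1: "(int A - 1) * (int B - 1) = int A * int B - int A - int B + 1" by (simp add: algebra_simps)
  have e2: "(int q - 1) * (int A * int B - 1) = int q * (int A * int B) - int A * int B - int q + 1"
    by (simp add: algebra_simps)
  have h: "2 * (int A * int B) \<le> int q * (int A * int B)" using assms by (intro mult_right_mono) auto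
  have "(int A - 1) * (int B - 1) < (int q - 1) * (int A * int B - 1)"
    unfolding e1 e2 using h assms by linarith
  thus ?thesis using i1 i2 by linarith
qed

lemma arith2:
  fixes q x T c :: int
  assumes q: "q \<ge> 2" and T: "T \<ge> q" and x: "x \<ge> 1" and c: "c * (T - 1) = T * x - 1"
    and ineq: "2 * (q * x - x) + c * (q^2 - q) \<le> q^2 * x - q"
  shows False
proof -
  have T1: "T - 1 > 0" using q T by simp
  have "(2 * (q * x - x) + c * (q^2 - q)) * (T - 1) \<le> (q^2 * x - q) * (T - 1)"
    using ineq T1 by (simp add: mult_right_mono)
  moreover have "c * (q^2 - q) * (T - 1) = (T * x - 1) * (q^2 - q)"
    using c by (metis mult.commute mult.left_commute)
  ultimately have H: "2 * (q * x - x) * (T - 1) + (T * x - 1) * (q^2 - q) \<le> (q^2 * x - q) * (T - 1)"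
    by (simp add: algebra_simps)
  have D: "(2 * (q * x - x) * (T - 1) + (T * x - 1) * (q^2 - q)) - (q^2 * x - q) * (T - 1)
      = (x * T) * (q - 2) + x * ((q - 1)^2 + 1) + q * (T - q)"
    by (simp add: algebra_simps power2_eq_square)
  have "(x * T) * (q - 2) \<ge> 0" using q T x by simp
  moreover have "x * ((q - 1)^2 + 1) > 0" using x by (simp add: add_pos_nonneg)
  moreover have "q * (T - q) \<ge> 0" using q T by simp
  ultimately show False using H D by linarith
qed

context setting
begin

lemma KV_S: "KV \<subseteq> S"
  unfolding KV_def S_def
proof (rule UN_least)
  fix P assume "P \<in> Bb"
  thus "sumset P \<Omega> \<subseteq> sumset \<Gamma> \<Omega>" using Bb_point unfolding sumset_def by blast
qed

lemma scal_card:
  fixes Y :: "('a ^ 'n) set"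
  assumes Y: "subsp Fq Y"
  shows "(q - 1) * card ({c *s y | c y. y \<in> Y} - {0}) \<le> (q ^ t - 1) * (card Y - 1)"
proof -
  define A where "A = (UNIV - {0::'a}) \<times> (Y - {0})"
  define f where "f = (\<lambda>(c::'a, y::'a^'n). c *s y)"
  have img: "f ` A = {c *s y | c y. y \<in> Y} - {0}"
  proof
    show "f ` A \<subseteq> {c *s y | c y. y \<in> Y} - {0}" unfolding A_def f_def by auto
  next
    show "{c *s y | c y. y \<in> Y} - {0} \<subseteq> f ` A"
    proof
      fix z assume "z \<in> {c *s y | c y. y \<in> Y} - {0}"
      then obtain c y where cy: "y \<in> Y" "z = c *s y" "z \<noteq> 0" by blast
      hence "c \<noteq> 0" "y \<noteq> 0" by auto
      hence "(c, y) \<in> A" using cy unfolding A_def by auto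
      thus "z \<in> f ` A" using cy unfolding f_def by force
    qed
  qed
  have fib: "q - 1 \<le> card {a\<in>A. f a = z}" if z: "z \<in> f ` A" for z
  proof -
    obtain c0 y0 where cy: "(c0, y0) \<in> A" "z = f (c0, y0)" using z by auto
    have c0: "c0 \<noteq> 0" and y0: "y0 \<in> Y" "y0 \<noteq> 0" using cy unfolding A_def by auto
    define g where "g d = (c0 * inverse d, d *s y0)" for d
    have "inj_on g (Fq - {0})" unfolding g_def using y0 by (auto intro!: inj_onI)
    moreover have "g ` (Fq - {0}) \<subseteq> {a\<in>A. f a = z}"
    proof
      fix w assume "w \<in> g ` (Fq - {0})"
      then obtain d where d: "d \<in> Fq" "d \<noteq> 0" "w = g d" by blast
      have "d *s y0 \<in> Y" using subspD(3)[OF Y d(1) y0(1)] .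
      moreover have "d *s y0 \<noteq> 0" using d y0 by simp
      moreover have "c0 * inverse d \<noteq> 0" using c0 d by simp
      moreover have "f (c0 * inverse d, d *s y0) = z" using cy d unfolding f_def by (simp add: vector_smult_assoc)
      ultimately show "w \<in> {a\<in>A. f a = z}" unfolding A_def g_def d(3) by simp
    qed
    ultimately have "card (g ` (Fq - {0})) \<le> card {a\<in>A. f a = z}" by (simp add: card_mono)
    moreover have "card (g ` (Fq - {0})) = q - 1"
      using card_image[OF \<open>inj_on g (Fq - {0})\<close>] cardFq subfldD(1)[OF Fq] by simp
    ultimately show ?thesis by simp
  qed
  have "(q - 1) * card (f ` A) \<le> card A" by (rule card_fibers_ge) (use fib in auto)
  moreover have "card A = (q ^ t - 1) * (card Y - 1)"
    unfolding A_def using cardA subspD(1)[OF Y] by (simp add: card_cartesian_product)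
  ultimately show ?thesis using img by simp
qed

lemma ext:
  fixes B :: "('a ^ 'n) set"
  assumes B: "finite B" "indep_over UNIV B"
    and Y: "card (sumset S (span_over UNIV B)) \<le> q ^ (k * t + E - t)"
  shows "\<exists>v. v \<notin> span_over UNIV B \<and> indep_over UNIV (insert v B)
            \<and> span_over UNIV (insert v B) \<inter> S = span_over UNIV B \<inter> S"
proof -
  define Z where "Z = span_over UNIV B"
  have ZU: "subsp UNIV Z" unfolding Z_def by (rule span_over_sub[OF subfld_UNIV])
  define Y' where "Y' = sumset S Z"
  have Y'sub: "subsp Fq Y'" unfolding Y'_def by (rule sumset_subsp[OF S_sub UNIV_sub[OF ZU]])
  define sc where "sc = {c *s y | c y. y \<in> Y'}"
  have ZY: "Z \<subseteq> Y'" unfolding Y'_def using sumset_sub2 subspD(1)[OF S_sub] by blast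
  have Ysc: "Y' \<subseteq> sc" unfolding sc_def by (force intro: vector_smult_lid[symmetric])
  have sc0: "0 \<in> sc" using Ysc subspD(1)[OF Y'sub] by auto
  have sc_lt: "card sc < q ^ (k * t + E)"
  proof (rule ccontr)
    assume "\<not> ?thesis"
    hence ge: "q ^ (k * t + E) \<le> card sc" by simp
    define A where "A = q ^ t"
    define B' where "B' = q ^ (k * t + E - t)"
    have AB: "A * B' = q ^ (k * t + E)" unfolding A_def B'_def
      using E_ge by (simp flip: power_add)
    have A: "A \<ge> q" unfolding A_def using t q2 by (metis One_nat_def Suc_leI power_increasing power_one_right zero_less_numeral less_le_trans pos2)
    have B1: "B' \<ge> 1" unfolding B'_def using q2 by simp
    have "(q - 1) * (card sc - 1) \<le> (q ^ t - 1) * (card Y' - 1)"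
      using scal_card[OF Y'sub] sc0 unfolding sc_def by (simp add: card_Diff_singleton)
    also have "\<dots> \<le> (A - 1) * (B' - 1)" unfolding A_def B'_def
      using Y unfolding Y'_def Z_def by (intro mult_left_mono diff_le_mono) auto
    also have "\<dots> < (q - 1) * (A * B' - 1)" by (rule arith1[OF q2 A B1])
    finally have "(q - 1) * (card sc - 1) < (q - 1) * (A * B' - 1)" .
    moreover have "(q - 1) * (A * B' - 1) \<le> (q - 1) * (card sc - 1)"
      using ge AB by (intro mult_left_mono diff_le_mono) auto
    ultimately show False by simp
  qed
  have "\<not> UNIV \<subseteq> sc"
  proof
    assume "UNIV \<subseteq> sc"
    hence "sc = UNIV" by blast
    thus False using sc_lt cardV by simp
  qed
  then obtain v where v: "v \<notin> sc" by blast
  have vZ: "v \<notin> Z" using v ZY Ysc by auto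
  have ind: "indep_over UNIV (insert v B)"
    by (rule indep_over_insert[OF subfld_UNIV B(2)]) (use vZ Z_def in simp)
  have "span_over UNIV (insert v B) \<inter> S = Z \<inter> S"
  proof
    show "span_over UNIV (insert v B) \<inter> S \<subseteq> Z \<inter> S"
    proof
      fix s assume s: "s \<in> span_over UNIV (insert v B) \<inter> S"
      then obtain z c where zc: "z \<in> Z" "s = z + c *s v" "s \<in> S"
        using span_over_insert[OF subfld_UNIV, of v B] unfolding Z_def by auto
      show "s \<in> Z \<inter> S"
      proof (cases "c = 0")
        case True thus ?thesis using zc by simp
      next
        case False
        have "s + - z \<in> Y'" unfolding Y'_def sumset_iff
          using zc subsp_neg[OF subfld_UNIV ZU zc(1)] by blast
        hence "inverse c *s (s + - z) \<in> sc" unfolding sc_def by blast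
        moreover have "inverse c *s (s + - z) = v" using zc False
          by (simp add: vector_add_ldistrib vector_smult_assoc vector_smult_rneg)
        ultimately show ?thesis using v by simp
      qed
    qed
  next
    show "Z \<inter> S \<subseteq> span_over UNIV (insert v B) \<inter> S"
      unfolding Z_def using span_over_mono[of B "insert v B" UNIV] by auto
  qed
  thus ?thesis using vZ ind unfolding Z_def by blast
qed

lemma iter:
  fixes x :: "'a ^ 'n"
  assumes x: "x \<noteq> 0" and M0: "M0 = span_over UNIV {x} \<inter> S"
    and bound: "\<And>j. j < J \<Longrightarrow> q ^ (E + 2) * q ^ (t * j) \<le> q ^ (k * t + E - t) * card M0"
  shows "1 \<le> j \<Longrightarrow> j \<le> J \<Longrightarrow> \<exists>B. finite B \<and> indep_over UNIV B \<and> card B = j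
           \<and> span_over UNIV {x} \<subseteq> span_over UNIV B \<and> span_over UNIV B \<inter> S = M0"
proof (induction j)
  case 0 thus ?case by simp
next
  case (Suc j)
  show ?case
  proof (cases "j = 0")
    case True
    thus ?thesis using M0 indep_over_single[of UNIV x] x by (intro exI[of _ "{x}"]) auto
  next
    case False
    then obtain B where B: "finite B" "indep_over UNIV B" "card B = j"
      "span_over UNIV {x} \<subseteq> span_over UNIV B" "span_over UNIV B \<inter> S = M0"
      using Suc by auto
    define Z where "Z = span_over UNIV B"
    have ZU: "subsp UNIV Z" unfolding Z_def by (rule span_over_sub[OF subfld_UNIV])
    have cZ: "card Z = q ^ (t * j)"
      using card_span_over[OF subfld_UNIV _ B(1) B(2)] cardA B(3) unfolding Z_def by (simp add: power_mult)
    have "card (sumset S Z) * card (S \<inter> Z) = card S * card Z"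
      by (rule prod_formula) (auto intro: subsp_subgrp[OF Fq] S_sub UNIV_sub[OF ZU])
    moreover have "S \<inter> Z = M0" using B(5) unfolding Z_def by auto
    ultimately have "card (sumset S Z) * card M0 = q ^ (E + 2) * q ^ (t * j)" using card_S cZ by simp
    also have "\<dots> \<le> q ^ (k * t + E - t) * card M0" using bound Suc by simp
    finally have le: "card (sumset S Z) * card M0 \<le> q ^ (k * t + E - t) * card M0" .
    have "card M0 > 0"
    proof -
      have "x \<in> span_over UNIV {x}" using span_over_inc[of UNIV "{x}"] by simp
      have "0 \<in> M0" unfolding M0 using subspD(1)[OF span_over_sub[OF subfld_UNIV]] subspD(1)[OF S_sub] by blast
      thus ?thesis by (auto simp: card_gt_0_iff)
    qed
    hence "card (sumset S Z) \<le> q ^ (k * t + E - t)" using le by simp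
    then obtain v where v: "v \<notin> Z" "indep_over UNIV (insert v B)"
      "span_over UNIV (insert v B) \<inter> S = Z \<inter> S"
      using ext[OF B(1,2)] unfolding Z_def by blast
    have vB: "v \<notin> B" using v(1) span_over_inc[of UNIV B] unfolding Z_def by auto
    show ?thesis
      using B v vB span_over_mono[of B "insert v B" UNIV] unfolding Z_def
      by (intro exI[of _ "insert v B"]) auto
  qed
qed

end



lemma arith3:
  fixes a b q n :: nat
  assumes "a \<le> q * b" "b \<le> a" "q * a \<le> n"
  shows "q * q * (a - b) \<le> (q - 1) * n"
proof -
  have "q * q * (a - b) = q * q * a - q * q * b" by (simp add: diff_mult_distrib2)
  also have "\<dots> \<le> q * q * a - q * a"
  proof -
    have "q * a \<le> q * (q * b)" using assms(1) by (rule mult_left_mono) simp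
    thus ?thesis by (simp add: mult.assoc diff_le_mono2)
  qed
  also have "\<dots> = (q - 1) * (q * a)" by (simp only: diff_mult_distrib mult_1 mult.assoc)
  also have "\<dots> \<le> (q - 1) * n" using assms(3) by (rule mult_left_mono) simp
  finally show ?thesis .
qed

lemma arith4:
  fixes a b q :: nat
  assumes "a \<le> q * b" "b \<le> a"
  shows "q * (a - b) \<le> (q - 1) * a"
proof -
  have "q * (a - b) = q * a - q * b" by (simp add: diff_mult_distrib2)
  also have "\<dots> \<le> q * a - a" using assms(1) by (rule diff_le_mono2)
  also have "\<dots> = (q - 1) * a" by (simp add: diff_mult_distrib)
  finally show ?thesis .
qed

context setting
begin

lemma tangents:
  assumes P: "P \<in> Bb"
  obtains l1 l2 where "l1 \<noteq> l2" "vsub Fq 2 l1" "l1 \<subseteq> \<Gamma>" "P \<subseteq> l1" "{R\<in>Bb. R \<subseteq> l1} = {P}"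
     "vsub Fq 2 l2" "l2 \<subseteq> \<Gamma>" "P \<subseteq> l2" "{R\<in>Bb. R \<subseteq> l2} = {P}"
proof -
  define T where "T = {L. vsub Fq 2 L \<and> L \<subseteq> \<Gamma> \<and> P \<subseteq> L \<and> card {R\<in>Bb. R \<subseteq> L} = 1}"
  have "2 \<le> card T" using tang P unfolding T_def by blast
  then obtain l1 l2 where l: "l1 \<in> T" "l2 \<in> T" "l1 \<noteq> l2" by (rule card_ge2_obtain)
  have one: "{R\<in>Bb. R \<subseteq> L} = {P}" if L: "L \<in> T" for L
  proof -
    have c: "card {R\<in>Bb. R \<subseteq> L} = 1" and PL: "P \<in> {R\<in>Bb. R \<subseteq> L}" using L P unfolding T_def by auto
    obtain R where "{R\<in>Bb. R \<subseteq> L} = {R}" using c by (rule card_1_singletonE)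
    thus ?thesis using PL by auto
  qed
  have L1: "vsub Fq 2 l1" "l1 \<subseteq> \<Gamma>" "P \<subseteq> l1" using l(1) unfolding T_def by auto
  have L2: "vsub Fq 2 l2" "l2 \<subseteq> \<Gamma>" "P \<subseteq> l2" using l(2) unfolding T_def by auto
  show ?thesis by (rule that[OF l(3) L1 one[OF l(1)] L2 one[OF l(2)]])
qed

lemma KV_H:
  assumes P: "P \<in> Bb" and l: "vsub Fq 2 l" "l \<subseteq> \<Gamma>" "{R\<in>Bb. R \<subseteq> l} = {P}"
  shows "KV \<inter> sumset l \<Omega> \<subseteq> sumset P \<Omega>"
proof
  fix w assume w: "w \<in> KV \<inter> sumset l \<Omega>"
  then obtain P' where P': "P' \<in> Bb" "w \<in> sumset P' \<Omega>" unfolding KV_def by blast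
  then obtain p' \<omega>1 where p': "p' \<in> P'" "\<omega>1 \<in> \<Omega>" "w = p' + \<omega>1" unfolding sumset_iff by blast
  have wl: "w \<in> sumset l \<Omega>" using w by blast
  obtain l0 \<omega>2 where l0: "l0 \<in> l" "\<omega>2 \<in> \<Omega>" "w = l0 + \<omega>2" using wl unfolding sumset_iff by blast
  have lsub: "subsp Fq l" using vsubD[OF l(1)] by simp
  have "p' \<in> \<Gamma>" using p'(1) Bb_point[OF P'(1)] by blast
  hence "p' - l0 \<in> \<Gamma>" using subsp_diff[OF Fq \<Gamma>(1)] l0(1) l(2) by blast
  moreover have "p' - l0 = \<omega>2 - \<omega>1" using p'(3) l0(3) by (simp add: algebra_simps)
  moreover have "\<omega>2 - \<omega>1 \<in> \<Omega>" using subsp_diff[OF Fq \<Omega>(1) l0(2) p'(2)] .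
  ultimately have "p' - l0 \<in> \<Gamma> \<inter> \<Omega>" by simp
  hence "p' - l0 = 0" using skew by simp
  hence pl: "p' = l0" by simp
  show "w \<in> sumset P \<Omega>"
  proof (cases "p' = 0")
    case True
    thus ?thesis unfolding sumset_iff using p' subspD(1)[OF Bb_sub[OF P]] by (intro bexI[of _ 0] bexI[of _ \<omega>1]) auto
  next
    case False
    obtain p'' where p'': "p'' \<noteq> 0" "P' = span_over Fq {p''}" using vsub1_D[OF Fq] Bb_point[OF P'(1)] by blast
    obtain c where c: "c \<in> Fq" "p' = c *s p''" using p'(1) p''(2) span_over_single[OF Fq] by auto
    have c0: "c \<noteq> 0" using c False by auto
    have "inverse c *s p' \<in> l" using subspD(3)[OF lsub subfldD(6)[OF Fq c(1)]] l0(1) pl by simp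
    hence "p'' \<in> l" using c c0 by (simp add: vector_smult_assoc)
    hence "P' \<subseteq> l" using p''(2) span_over_least[OF lsub] by simp
    hence "P' \<in> {R\<in>Bb. R \<subseteq> l}" using P' by simp
    hence "P' = P" using l(3) by simp
    thus ?thesis using P' by simp
  qed
qed

lemma last_step:
  fixes B :: "('a ^ 'n) set" and u :: "'a ^ 'n"
  assumes B: "finite B" "indep_over UNIV B" "card B = k - 1" and k2: "k \<ge> 2"
    and ZS: "span_over UNIV B \<inter> S = span_over Fq {u}" and u: "u \<noteq> 0"
    and P: "P \<in> Bb" and QP: "span_over Fq {u} \<subseteq> sumset P \<Omega>"
  shows "\<exists>s. s \<notin> span_over UNIV B \<and> indep_over UNIV (insert s B)
            \<and> span_over UNIV (insert s B) \<inter> KV \<subseteq> span_over Fq {u}"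
proof -
  define Z where "Z = span_over UNIV B"
  define Q where "Q = span_over Fq {u}"
  have ZU: "subsp UNIV Z" unfolding Z_def by (rule span_over_sub[OF subfld_UNIV])
  have Zq: "subsp Fq Z" by (rule UNIV_sub[OF ZU])
  have cZ: "card Z = q ^ (t * (k - 1))"
    using card_span_over[OF subfld_UNIV _ B(1) B(2)] cardA B(3) unfolding Z_def by (simp add: power_mult)
  have ZSQ: "Z \<inter> S = Q" using ZS unfolding Z_def Q_def .
  have Qsub: "subsp Fq Q" unfolding Q_def by (rule span_over_sub[OF Fq])
  have cQ: "card Q = q" unfolding Q_def using card_line[OF Fq u] cardFq by simp
  have QZ: "Q \<subseteq> Z" using ZSQ by blast
  have QS: "Q \<subseteq> S" using ZSQ by blast
  obtain l1 l2 where l: "l1 \<noteq> l2" "vsub Fq 2 l1" "l1 \<subseteq> \<Gamma>" "P \<subseteq> l1" "{R\<in>Bb. R \<subseteq> l1} = {P}"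
     "vsub Fq 2 l2" "l2 \<subseteq> \<Gamma>" "P \<subseteq> l2" "{R\<in>Bb. R \<subseteq> l2} = {P}"
    using tangents[OF P] by blast
  have l1s: "subsp Fq l1" "card l1 = q ^ 2" using vsubD[OF l(2)] by auto
  have l2s: "subsp Fq l2" "card l2 = q ^ 2" using vsubD[OF l(6)] by auto
  have Ps: "subsp Fq P" "card P = q" using vsubD Bb_point[OF P] by auto
  define H1 where "H1 = sumset l1 \<Omega>"
  define H2 where "H2 = sumset l2 \<Omega>"
  define PO where "PO = sumset P \<Omega>"
  have H1s: "subsp Fq H1" unfolding H1_def by (rule sumset_subsp[OF l1s(1) \<Omega>(1)])
  have H2s: "subsp Fq H2" unfolding H2_def by (rule sumset_subsp[OF l2s(1) \<Omega>(1)])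
  have POs: "subsp Fq PO" unfolding PO_def by (rule sumset_subsp[OF Ps(1) \<Omega>(1)])
  have cardsum: "card (sumset A \<Omega>) = card A * q ^ (E - 1)" if A: "subsp Fq A" "A \<subseteq> \<Gamma>" for A
  proof -
    have "card (sumset A \<Omega>) * card (A \<inter> \<Omega>) = card A * card \<Omega>"
      by (rule prod_formula) (auto intro: subsp_subgrp[OF Fq] A(1) \<Omega>(1))
    moreover have "A \<inter> \<Omega> = {0}" using skew A subspD(1)[OF A(1)] subspD(1)[OF \<Omega>(1)] by auto
    ultimately show ?thesis using \<Omega>(2) by simp
  qed
  have Eq: "q ^ (E - 1) * q = q ^ E" using E_ge t by (metis Suc_diff_1 power_Suc2 less_le_trans)
  have cH1: "card H1 = q * q ^ E" unfolding H1_def using cardsum[OF l1s(1) l(3)] l1s(2) Eq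
    by (simp add: power2_eq_square mult.assoc mult.commute mult.left_commute)
  have cH2: "card H2 = q * q ^ E" unfolding H2_def using cardsum[OF l2s(1) l(7)] l2s(2) Eq
    by (simp add: power2_eq_square mult.assoc mult.commute mult.left_commute)
  have cPO: "card PO = q ^ E" unfolding PO_def using cardsum[OF Ps(1)] Bb_point[OF P] Ps(2) Eq
    by (simp add: mult.commute)
  have POH1: "PO \<subseteq> H1" unfolding PO_def H1_def sumset_def using l(4) by blast
  have POH2: "PO \<subseteq> H2" unfolding PO_def H2_def sumset_def using l(8) by blast
  have H1S: "H1 \<subseteq> S" unfolding H1_def S_def sumset_def using l(3) by blast
  have H2S: "H2 \<subseteq> S" unfolding H2_def S_def sumset_def using l(7) by blast
  have QPO: "Q \<subseteq> PO" using QP unfolding Q_def PO_def .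
  have l12: "l1 \<inter> l2 = P"
  proof (rule ccontr)
    assume ne: "l1 \<inter> l2 \<noteq> P"
    have Pl: "P \<subseteq> l1 \<inter> l2" using l(4,8) by blast
    then obtain y where y: "y \<in> l1 \<inter> l2" "y \<notin> P" using ne by blast
    have I: "subsp Fq (l1 \<inter> l2)" by (rule subsp_Int[OF l1s(1) l2s(1)])
    have "card Fq * card P \<le> card (l1 \<inter> l2)" by (rule dir_le[OF Fq Ps(1) I Pl y])
    hence ge: "q ^ 2 \<le> card (l1 \<inter> l2)" using cardFq Ps(2) by (simp add: power2_eq_square)
    have "l1 \<inter> l2 = l1" by (rule subsp_card_eq) (use ge l1s(2) in auto)
    moreover have "l1 \<inter> l2 = l2" by (rule subsp_card_eq) (use ge l2s(2) in auto)
    ultimately show False using l(1) by simp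
  qed
  have H12: "H1 \<inter> H2 = PO"
  proof
    show "H1 \<inter> H2 \<subseteq> PO"
    proof
      fix h assume h: "h \<in> H1 \<inter> H2"
      have "h \<in> sumset l1 \<Omega>" "h \<in> sumset l2 \<Omega>" using h unfolding H1_def H2_def by auto
      then obtain a1 w1 a2 w2 where aw: "a1 \<in> l1" "w1 \<in> \<Omega>" "h = a1 + w1" "a2 \<in> l2" "w2 \<in> \<Omega>" "h = a2 + w2"
        unfolding sumset_iff by blast
      have "a1 - a2 \<in> \<Gamma>" using subsp_diff[OF Fq \<Gamma>(1)] aw l(3,7) by blast
      moreover have "a1 - a2 = w2 - w1" using aw by (simp add: algebra_simps)
      moreover have "w2 - w1 \<in> \<Omega>" using subsp_diff[OF Fq \<Omega>(1) aw(5) aw(2)] .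
      ultimately have "a1 - a2 \<in> \<Gamma> \<inter> \<Omega>" by simp
      hence "a1 - a2 = 0" using skew by simp
      hence "a1 \<in> P" using aw l12 by auto
      thus "h \<in> PO" unfolding PO_def sumset_iff using aw by blast
    qed
  next
    show "PO \<subseteq> H1 \<inter> H2" using POH1 POH2 by blast
  qed
  have KVH1: "KV \<inter> H1 \<subseteq> PO" unfolding H1_def PO_def by (rule KV_H[OF P l(2,3,5)])
  have KVH2: "KV \<inter> H2 \<subseteq> PO" unfolding H2_def PO_def by (rule KV_H[OF P l(6,7,9)])
  define Tg where "Tg = (H1 \<union> H2) - PO"
  have cTg: "card Tg = 2 * (q * q ^ E - q ^ E)"
  proof -
    have "Tg = (H1 - PO) \<union> (H2 - PO)" unfolding Tg_def by blast
    moreover have "(H1 - PO) \<inter> (H2 - PO) = {}" using H12 by blast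
    ultimately have "card Tg = card (H1 - PO) + card (H2 - PO)" by (simp add: card_Un_disjoint)
    also have "\<dots> = 2 * (q * q ^ E - q ^ E)"
      using card_Diff_subset[OF _ POH1] card_Diff_subset[OF _ POH2] cH1 cH2 cPO by simp
    finally show ?thesis .
  qed
  have TgS: "Tg \<subseteq> S" unfolding Tg_def using H1S H2S by blast
  have TgQ: "Tg \<inter> Q = {}" unfolding Tg_def using QPO by blast
  define Wf where "Wf v = span_over UNIV (insert v B)" for v
  have Wf_sub: "subsp UNIV (Wf v)" for v unfolding Wf_def by (rule span_over_sub[OF subfld_UNIV])
  have Wf_Z: "Z \<subseteq> Wf v" for v unfolding Wf_def Z_def by (rule span_over_mono) blast
  have Wf_v: "v \<in> Wf v" for v unfolding Wf_def using span_over_inc[of UNIV "insert v B"] by auto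
  have Wf_ind: "indep_over UNIV (insert v B)" if "v \<notin> Z" for v
    by (rule indep_over_insert[OF subfld_UNIV B(2)]) (use that Z_def in simp)
  have vB: "v \<notin> B" if "v \<notin> Z" for v
    using that span_over_inc[of UNIV B] unfolding Z_def by auto
  have Wf_card: "card (Wf v) = q ^ (t * k)" if v: "v \<notin> Z" for v
  proof -
    have "card (insert v B) = k" using vB[OF v] B(1,3) k2 by simp
    thus ?thesis using card_span_over[OF subfld_UNIV _ _ Wf_ind[OF v]] B(1) cardA unfolding Wf_def
      by (simp add: power_mult)
  qed
  have Wf_same: "Wf w = Wf v" if v: "v \<notin> Z" and w: "w \<in> Wf v" "w \<notin> Z" for v w
  proof -
    have "insert w B \<subseteq> Wf v" using w(1) Wf_Z span_over_inc[of UNIV B] unfolding Z_def by blast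
    hence "Wf w \<subseteq> Wf v" unfolding Wf_def[of w] by (rule span_over_least[OF Wf_sub])
    moreover have "card (Wf v) \<le> card (Wf w)" using Wf_card[OF v] Wf_card[OF w(2)] by simp
    ultimately show ?thesis by (rule subsp_card_eq)
  qed
  define Ws where "Ws = Wf ` (UNIV - Z)"
  have fWs: "finite Ws" unfolding Ws_def by simp
  have Ws_cases: "\<exists>v. v \<notin> Z \<and> W = Wf v" if "W \<in> Ws" for W using that unfolding Ws_def by blast
  have disj: "(W1 - Z) \<inter> (W2 - Z) = {}" if W12: "W1 \<in> Ws" "W2 \<in> Ws" "W1 \<noteq> W2" for W1 W2
  proof (rule ccontr)
    assume "(W1 - Z) \<inter> (W2 - Z) \<noteq> {}"
    then obtain w where w: "w \<in> W1" "w \<in> W2" "w \<notin> Z" by blast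
    obtain v1 where v1: "v1 \<notin> Z" "W1 = Wf v1" using Ws_cases[OF W12(1)] by blast
    obtain v2 where v2: "v2 \<notin> Z" "W2 = Wf v2" using Ws_cases[OF W12(2)] by blast
    have "Wf w = W1" using Wf_same[OF v1(1), of w] w v1(2) by simp
    moreover have "Wf w = W2" using Wf_same[OF v2(1), of w] w v2(2) by simp
    ultimately have "W1 = W2" by simp
    thus False using W12(3) by simp
  qed
  have G3: "card Ws * (q ^ (t * k) - q ^ (t * (k - 1))) = q ^ (k * t + E) - q ^ (t * (k - 1))"
  proof -
    have U: "UNIV - Z = (\<Union>W\<in>Ws. W - Z)"
    proof
      show "UNIV - Z \<subseteq> (\<Union>W\<in>Ws. W - Z)" using Wf_v unfolding Ws_def by blast
      show "(\<Union>W\<in>Ws. W - Z) \<subseteq> UNIV - Z" by blast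
    qed
    have "card (UNIV - Z) = (\<Sum>W\<in>Ws. card (W - Z))"
      unfolding U by (rule card_UN_disjoint) (use fWs disj in auto)
    also have "\<dots> = (\<Sum>W\<in>Ws. q ^ (t * k) - q ^ (t * (k - 1)))"
    proof (rule sum.cong[OF refl])
      fix W assume "W \<in> Ws"
      then obtain v where v: "v \<notin> Z" "W = Wf v" using Ws_cases by blast
      show "card (W - Z) = q ^ (t * k) - q ^ (t * (k - 1))"
        using card_Diff_subset[OF _ Wf_Z[of v]] Wf_card[OF v(1)] cZ v(2) by simp
    qed
    also have "\<dots> = card Ws * (q ^ (t * k) - q ^ (t * (k - 1)))" by simp
    finally have "card (UNIV - Z) = card Ws * (q ^ (t * k) - q ^ (t * (k - 1)))" .
    moreover have "card (UNIV - Z) = q ^ (k * t + E) - q ^ (t * (k - 1))"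
      using card_Diff_subset[of Z UNIV] cardV cZ by simp
    ultimately show ?thesis by simp
  qed
  have QW: "Q \<subseteq> W \<inter> S" if "W \<in> Ws" for W using QZ QS Wf_Z Ws_cases[OF that] by blast
  have G4: "(\<Sum>W\<in>Ws. card (W \<inter> S) - q) = q ^ (E + 2) - q"
  proof -
    have U: "S - Q = (\<Union>W\<in>Ws. W \<inter> S - Q)"
    proof
      show "S - Q \<subseteq> (\<Union>W\<in>Ws. W \<inter> S - Q)"
      proof
        fix s assume s: "s \<in> S - Q"
        hence "s \<notin> Z" using ZSQ by blast
        hence "Wf s \<in> Ws" unfolding Ws_def by blast
        thus "s \<in> (\<Union>W\<in>Ws. W \<inter> S - Q)" using s Wf_v[of s] by blast
      qed
      show "(\<Union>W\<in>Ws. W \<inter> S - Q) \<subseteq> S - Q" by blast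
    qed
    have sub: "W \<inter> S - Q \<subseteq> W - Z" for W using ZSQ by blast
    have "card (S - Q) = (\<Sum>W\<in>Ws. card (W \<inter> S - Q))"
      unfolding U
    proof (rule card_UN_disjoint)
      show "finite Ws" by (rule fWs)
      show "\<forall>W\<in>Ws. finite (W \<inter> S - Q)" by simp
      show "\<forall>W1\<in>Ws. \<forall>W2\<in>Ws. W1 \<noteq> W2 \<longrightarrow> (W1 \<inter> S - Q) \<inter> (W2 \<inter> S - Q) = {}"
        using disj sub by blast
    qed
    also have "\<dots> = (\<Sum>W\<in>Ws. card (W \<inter> S) - q)"
      by (rule sum.cong[OF refl]) (use card_Diff_subset[OF _ QW] cQ in simp)
    finally show ?thesis using card_Diff_subset[OF _ QS] card_S cQ by simp
  qed
  have G5: "q ^ 2 \<le> card (W \<inter> S)" if W: "W \<in> Ws" for W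
  proof -
    obtain v where v: "v \<notin> Z" "W = Wf v" using Ws_cases[OF W] by blast
    have Wq: "subsp Fq W" using UNIV_sub[OF Wf_sub] v by simp
    have "card W * card S \<le> card (W \<inter> S) * card (UNIV :: ('a^'n) set)"
      by (rule PF_le[OF Fq Wq S_sub]) simp
    moreover have "card W * card S = q ^ 2 * q ^ (k * t + E)"
    proof -
      have "card W * card S = q ^ (t * k + (E + 2))" using Wf_card[OF v(1)] v(2) card_S by (simp add: power_add)
      also have "t * k + (E + 2) = 2 + (k * t + E)" by simp
      also have "q ^ (2 + (k * t + E)) = q ^ 2 * q ^ (k * t + E)" by (simp only: power_add)
      finally show ?thesis .
    qed
    ultimately have "q ^ 2 * q ^ (k * t + E) \<le> card (W \<inter> S) * q ^ (k * t + E)" using cardV by simp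
    thus ?thesis by (rule cancel_pos) (use q2 in simp)
  qed
  have G6: "q ^ 3 \<le> card (W \<inter> S)" if W: "W \<in> Ws" and ne: "card (W \<inter> S) \<noteq> q ^ 2" for W
  proof -
    obtain v where v: "v \<notin> Z" "W = Wf v" using Ws_cases[OF W] by blast
    have N: "subsp Fq (W \<inter> S)" using subsp_Int[OF UNIV_sub[OF Wf_sub] S_sub] v by simp
    have gt: "q ^ 2 < card (W \<inter> S)" using G5[OF W] ne by simp
    have "\<not> W \<inter> S \<subseteq> Q"
    proof
      assume "W \<inter> S \<subseteq> Q"
      hence "card (W \<inter> S) \<le> q" using cQ by (metis card_mono finite)
      thus False using gt q2 by (metis le_trans less_le_not_le power2_nat_le_imp_le power2_eq_square le_square)
    qed
    then obtain y1 where y1: "y1 \<in> W \<inter> S" "y1 \<notin> Q" by blast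
    define A1 where "A1 = sumset Q (span_over Fq {y1})"
    have A1s: "subsp Fq A1" unfolding A1_def by (rule sumset_subsp[OF Qsub span_over_sub[OF Fq]])
    have cA1: "card A1 = q ^ 2" unfolding A1_def using card_sumset_dir[OF Fq Qsub y1(2)] cardFq cQ
      by (simp add: power2_eq_square)
    have A1N: "A1 \<subseteq> W \<inter> S" unfolding A1_def
      by (rule sumset_least[OF N QW[OF W]]) (rule span_over_least[OF N], use y1 in simp)
    have "\<not> W \<inter> S \<subseteq> A1"
    proof
      assume "W \<inter> S \<subseteq> A1"
      hence "card (W \<inter> S) \<le> card A1" by (metis card_mono finite)
      thus False using gt cA1 by simp
    qed
    then obtain y2 where y2: "y2 \<in> W \<inter> S" "y2 \<notin> A1" by blast
    have "card Fq * card A1 \<le> card (W \<inter> S)" by (rule dir_le[OF Fq A1s N A1N y2])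
    hence "q * (q * q) \<le> card (W \<inter> S)" using cardFq cA1 by (simp add: power2_eq_square)
    thus ?thesis by (simp add: power3_eq_cube mult.assoc)
  qed
  have hyp: "card A \<le> q * card (A \<inter> PO)" if A: "subsp Fq A" "A \<subseteq> H" and H: "H = H1 \<or> H = H2" for A H
  proof -
    have Hs: "subsp Fq H" "PO \<subseteq> H" "card H = q * card PO" using H H1s H2s POH1 POH2 cH1 cH2 cPO by auto
    have "card A * card PO \<le> card (A \<inter> PO) * card H"
      by (rule PF_le[OF Fq A(1) POs]) (rule sumset_least[OF Hs(1) A(2) Hs(2)])
    hence "card A * card PO \<le> (q * card (A \<inter> PO)) * card PO" using Hs(3) by (simp add: mult.commute mult.left_commute)
    thus ?thesis by (rule cancel_pos) (use cPO q2 in simp)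
  qed
  have notin: "q * card (N \<inter> H) \<le> card N" if N: "subsp Fq N" "\<not> N \<subseteq> H" and H: "H = H1 \<or> H = H2" for N H
  proof -
    have Hs: "subsp Fq H" "card H > 0" using H H1s H2s cH1 cH2 q2 by auto
    have pf: "card (sumset N H) * card (N \<inter> H) = card N * card H"
      by (rule prod_formula) (auto intro: subsp_subgrp[OF Fq] N(1) Hs(1))
    obtain y where y: "y \<in> N" "y \<notin> H" using N(2) by blast
    have NH: "subsp Fq (sumset N H)" by (rule sumset_subsp[OF N(1) Hs(1)])
    have "card Fq * card H \<le> card (sumset N H)"
      by (rule dir_le[OF Fq Hs(1) NH sumset_sub2[OF subspD(1)[OF N(1)]]])
         (use y sumset_sub1[OF subspD(1)[OF Hs(1)], of N] in auto)
    hence "q * card H * card (N \<inter> H) \<le> card N * card H" using pf cardFq by (metis mult_le_mono1)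
    hence "(q * card (N \<inter> H)) * card H \<le> card N * card H" by (simp add: mult.commute mult.left_commute)
    thus ?thesis by (rule cancel_pos) (use Hs(2) in simp)
  qed
  have G7: "q * card (N \<inter> Tg) \<le> (q - 1) * card N" if N: "subsp Fq N" for N
  proof -
    define A1 where "A1 = N \<inter> H1"
    define A2 where "A2 = N \<inter> H2"
    have A1s: "subsp Fq A1" unfolding A1_def by (rule subsp_Int[OF N H1s])
    have A2s: "subsp Fq A2" unfolding A2_def by (rule subsp_Int[OF N H2s])
    have h1: "card A1 \<le> q * card (A1 \<inter> PO)" by (rule hyp[OF A1s, of H1]) (auto simp: A1_def)
    have h2: "card A2 \<le> q * card (A2 \<inter> PO)" by (rule hyp[OF A2s, of H2]) (auto simp: A2_def)
    have b1: "card (A1 \<inter> PO) \<le> card A1" by (simp add: card_mono)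
    have b2: "card (A2 \<inter> PO) \<le> card A2" by (simp add: card_mono)
    have split: "N \<inter> Tg = (A1 - PO) \<union> (A2 - PO)" unfolding Tg_def A1_def A2_def by blast
    have dj: "(A1 - PO) \<inter> (A2 - PO) = {}" unfolding A1_def A2_def using H12 by blast
    have d1: "card (A1 - PO) = card A1 - card (A1 \<inter> PO)" by (simp add: card_Diff_subset_Int)
    have d2: "card (A2 - PO) = card A2 - card (A2 \<inter> PO)" by (simp add: card_Diff_subset_Int)
    have cN: "card (N \<inter> Tg) = (card A1 - card (A1 \<inter> PO)) + (card A2 - card (A2 \<inter> PO))"
      unfolding split using dj d1 d2 by (simp add: card_Un_disjoint)
    show ?thesis
    proof (cases "N \<subseteq> H1")
      case True
      hence "A1 = N" unfolding A1_def by blast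
      moreover have "A2 - PO = {}" using True H12 unfolding A2_def by blast
      ultimately have "N \<inter> Tg = A1 - PO" using split by blast
      hence "card (N \<inter> Tg) = card N - card (N \<inter> PO)" using d1 \<open>A1 = N\<close> by simp
      moreover have "q * (card N - card (N \<inter> PO)) \<le> (q - 1) * card N"
        using arith4[OF h1 b1] \<open>A1 = N\<close> by simp
      ultimately show ?thesis by simp
    next
      case F1: False
      show ?thesis
      proof (cases "N \<subseteq> H2")
        case True
        hence "A2 = N" unfolding A2_def by blast
        moreover have "A1 - PO = {}" using True H12 unfolding A1_def by blast
        ultimately have "N \<inter> Tg = A2 - PO" using split by blast
        hence "card (N \<inter> Tg) = card N - card (N \<inter> PO)" using d2 \<open>A2 = N\<close> by simp
        moreover have "q * (card N - card (N \<inter> PO)) \<le> (q - 1) * card N"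
          using arith4[OF h2 b2] \<open>A2 = N\<close> by simp
        ultimately show ?thesis by simp
      next
        case F2: False
        have n1: "q * card A1 \<le> card N" unfolding A1_def by (rule notin[OF N F1]) simp
        have n2: "q * card A2 \<le> card N" unfolding A2_def by (rule notin[OF N F2]) simp
        have "q * q * (card A1 - card (A1 \<inter> PO)) \<le> (q - 1) * card N" by (rule arith3[OF h1 b1 n1])
        moreover have "q * q * (card A2 - card (A2 \<inter> PO)) \<le> (q - 1) * card N" by (rule arith3[OF h2 b2 n2])
        ultimately have "q * q * card (N \<inter> Tg) \<le> 2 * ((q - 1) * card N)"
          unfolding cN by (simp add: add_mult_distrib2)
        also have "\<dots> \<le> q * ((q - 1) * card N)" using q2 by (intro mult_right_mono) auto
        finally have "q * (q * card (N \<inter> Tg)) \<le> q * ((q - 1) * card N)" by (simp add: mult.assoc)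
        thus ?thesis using q2 by simp
      qed
    qed
  qed
  have exs: "\<exists>s\<in>Tg. card (Wf s \<inter> S) = q ^ 2"
  proof (rule ccontr)
    assume "\<not> ?thesis"
    hence bad: "\<forall>s\<in>Tg. card (Wf s \<inter> S) \<noteq> q ^ 2" by blast
    define Bad where "Bad = {W\<in>Ws. card (W \<inter> S) \<noteq> q ^ 2}"
    have fBad: "finite Bad" unfolding Bad_def using fWs by simp
    have cov: "Tg \<subseteq> (\<Union>W\<in>Bad. W \<inter> S \<inter> Tg)"
    proof
      fix s assume s: "s \<in> Tg"
      have "s \<notin> Z" using s TgS TgQ ZSQ by blast
      hence "Wf s \<in> Ws" unfolding Ws_def by blast
      hence "Wf s \<in> Bad" using bad s unfolding Bad_def by blast
      thus "s \<in> (\<Union>W\<in>Bad. W \<inter> S \<inter> Tg)" using s TgS Wf_v[of s] by blast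
    qed
    have "card Tg \<le> card (\<Union>W\<in>Bad. W \<inter> S \<inter> Tg)" using cov by (simp add: card_mono)
    also have "\<dots> \<le> (\<Sum>W\<in>Bad. card (W \<inter> S \<inter> Tg))" by (rule card_UN_le[OF fBad])
    also have "\<dots> \<le> (\<Sum>W\<in>Bad. card (W \<inter> S) - q ^ 2)"
    proof (rule sum_mono)
      fix W assume W: "W \<in> Bad"
      hence W': "W \<in> Ws" "card (W \<inter> S) \<noteq> q ^ 2" unfolding Bad_def by auto
      obtain v where v: "v \<notin> Z" "W = Wf v" using Ws_cases[OF W'(1)] by blast
      have N: "subsp Fq (W \<inter> S)" using subsp_Int[OF UNIV_sub[OF Wf_sub] S_sub] v by simp
      have g7: "q * card (W \<inter> S \<inter> Tg) \<le> (q - 1) * card (W \<inter> S)" using G7[OF N] by simp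
      have g6: "q ^ 3 \<le> card (W \<inter> S)" by (rule G6[OF W'])
      have "q * card (W \<inter> S \<inter> Tg) \<le> q * card (W \<inter> S) - card (W \<inter> S)"
        using g7 by (simp add: diff_mult_distrib)
      also have "\<dots> \<le> q * card (W \<inter> S) - q ^ 3" using g6 by simp
      also have "\<dots> = q * (card (W \<inter> S) - q ^ 2)" by (simp add: diff_mult_distrib2 power3_eq_cube power2_eq_square mult.assoc)
      finally show "card (W \<inter> S \<inter> Tg) \<le> card (W \<inter> S) - q ^ 2" using q2 by simp
    qed
    also have "\<dots> = (\<Sum>W\<in>Ws. card (W \<inter> S) - q ^ 2)"
      by (rule sum.mono_neutral_left) (use fWs G5 in \<open>auto simp: Bad_def\<close>)
    finally have c1: "card Tg \<le> (\<Sum>W\<in>Ws. card (W \<inter> S) - q ^ 2)" .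
    have "(\<Sum>W\<in>Ws. card (W \<inter> S) - q) = (\<Sum>W\<in>Ws. (card (W \<inter> S) - q ^ 2) + (q ^ 2 - q))"
    proof (rule sum.cong[OF refl])
      fix W assume "W \<in> Ws"
      hence "q ^ 2 \<le> card (W \<inter> S)" by (rule G5)
      moreover have "q \<le> q ^ 2" using q2 by (simp add: power2_eq_square)
      ultimately show "card (W \<inter> S) - q = (card (W \<inter> S) - q ^ 2) + (q ^ 2 - q)" by simp
    qed
    also have "\<dots> = (\<Sum>W\<in>Ws. card (W \<inter> S) - q ^ 2) + card Ws * (q ^ 2 - q)"
      by (simp add: sum.distrib)
    finally have "card Tg + card Ws * (q ^ 2 - q) \<le> q ^ (E + 2) - q" using G4 c1 by simp
    define x where "x = q ^ E"
    define T where "T = q ^ t"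
    define a where "a = q ^ (t * (k - 1))"
    define c where "c = card Ws"
    have x1: "x \<ge> 1" unfolding x_def using q2 by simp
    have Tq: "T \<ge> q" unfolding T_def using t q2
      by (metis One_nat_def Suc_leI power_increasing power_one_right zero_less_numeral less_le_trans pos2)
    have a0: "a > 0" unfolding a_def using q2 by simp
    have e1: "q ^ (t * k) = a * T" unfolding a_def T_def
    proof -
      have "t * k = t * (k - 1) + t" using k2 by (simp add: algebra_simps)
      thus "q ^ (t * k) = q ^ (t * (k - 1)) * q ^ t" by (simp add: power_add)
    qed
    have e2: "q ^ (k * t + E) = a * T * x" unfolding a_def T_def x_def
    proof -
      have "k * t + E = t * (k - 1) + t + E" using k2 by (simp add: algebra_simps)
      thus "q ^ (k * t + E) = q ^ (t * (k - 1)) * q ^ t * q ^ E" by (simp add: power_add)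
    qed
    have g3: "c * (a * T - a) = a * T * x - a" using G3 unfolding c_def e1 e2 a_def[symmetric] .
    have Tx: "1 \<le> T * x" using Tq q2 x1 by (simp add: one_le_mult_iff)
    have aTx: "a \<le> a * T * x" using mult_le_mono2[OF Tx, of a] by (simp add: mult.assoc)
    have aT: "a \<le> a * T" using Tq q2 by simp
    have l: "int (c * (a * T - a)) = int c * (int a * int T - int a)" using aT by (simp add: of_nat_diff)
    have r: "int (a * T * x - a) = int a * int T * int x - int a" using aTx by (simp add: of_nat_diff)
    have g3i: "int c * (int a * int T - int a) = int a * int T * int x - int a"
      using g3 l r by simp
    have "int a * (int c * (int T - 1)) = int a * (int T * int x - 1)"
      using g3i by (simp add: algebra_simps)
    hence cT: "int c * (int T - 1) = int T * int x - 1" using a0 by simp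
    have pe: "q ^ (E + 2) = q ^ 2 * x" unfolding x_def by (simp only: power_add mult.commute)
    have ineq0: "card Tg + c * (q ^ 2 - q) \<le> q ^ 2 * x - q"
      using \<open>card Tg + card Ws * (q ^ 2 - q) \<le> q ^ (E + 2) - q\<close> unfolding c_def pe .
    have qq: "q \<le> q ^ 2" using q2 by (simp add: power2_eq_square)
    have qx: "x \<le> q * x" using q2 by simp
    have q2x: "q \<le> q ^ 2 * x" using mult_le_mono[OF qq x1] by simp
    have "int (card Tg) = 2 * (int q * int x - int x)" using cTg qx unfolding x_def by (simp add: of_nat_diff)
    moreover have "int (c * (q ^ 2 - q)) = int c * (int q ^ 2 - int q)" using qq by (simp add: of_nat_diff)
    moreover have "int (q ^ 2 * x - q) = int q ^ 2 * int x - int q" using q2x by (simp add: of_nat_diff)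
    ultimately have "2 * (int q * int x - int x) + int c * (int q ^ 2 - int q) \<le> int q ^ 2 * int x - int q"
      using ineq0 by (metis of_nat_add of_nat_le_iff)
    moreover have "int q \<ge> 2" "int T \<ge> int q" "int x \<ge> 1" using q2 Tq x1 by auto
    ultimately show False using arith2 cT by blast
  qed
  then obtain s where s: "s \<in> Tg" "card (Wf s \<inter> S) = q ^ 2" by blast
  have sZ: "s \<notin> Z" using s TgS TgQ ZSQ by blast
  have sQ: "s \<notin> Q" using s(1) TgQ by blast
  have N: "subsp Fq (Wf s \<inter> S)" using subsp_Int[OF UNIV_sub[OF Wf_sub] S_sub] by simp
  have Ws: "Wf s \<in> Ws" using sZ unfolding Ws_def by blast
  define A where "A = sumset Q (span_over Fq {s})"
  have AN: "A \<subseteq> Wf s \<inter> S" unfolding A_def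
    by (rule sumset_least[OF N QW[OF Ws]]) (rule span_over_least[OF N], use s(1) TgS Wf_v[of s] in blast)
  have cA: "card A = q ^ 2" unfolding A_def using card_sumset_dir[OF Fq Qsub sQ] cardFq cQ
    by (simp add: power2_eq_square)
  have AeqN: "A = Wf s \<inter> S" by (rule subsp_card_eq[OF AN]) (use cA s(2) in simp)
  have res: "Wf s \<inter> KV \<subseteq> Q"
  proof
    fix w assume w: "w \<in> Wf s \<inter> KV"
    hence "w \<in> A" using AeqN KV_S by blast
    then obtain a y where ay: "a \<in> Q" "y \<in> span_over Fq {s}" "w = a + y" unfolding A_def sumset_iff by blast
    obtain b where b: "b \<in> Fq" "y = b *s s" using ay(2) span_over_single[OF Fq] by auto
    show "w \<in> Q"
    proof (cases "b = 0")
      case True thus ?thesis using ay b by simp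
    next
      case False
      obtain H where H: "H = H1 \<or> H = H2" "s \<in> H" using s(1) unfolding Tg_def by blast
      have Hs: "subsp Fq H" "PO \<subseteq> H" "KV \<inter> H \<subseteq> PO" using H H1s H2s POH1 POH2 KVH1 KVH2 by auto
      have "a \<in> H" using ay(1) QPO Hs(2) by blast
      moreover have "y \<in> H" using subspD(3)[OF Hs(1) b(1) H(2)] b(2) by simp
      ultimately have "w \<in> H" using subspD(2)[OF Hs(1)] ay(3) by simp
      hence "w \<in> PO" using w Hs(3) by blast
      hence "w - a \<in> PO" using subsp_diff[OF Fq POs] ay(1) QPO by blast
      hence "y \<in> PO" using ay(3) by simp
      hence "inverse b *s y \<in> PO" using subspD(3)[OF POs subfldD(6)[OF Fq b(1)]] by simp
      hence "s \<in> PO" using b False by (simp add: vector_smult_assoc)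
      thus ?thesis using s(1) unfolding Tg_def by blast
    qed
  qed
  show ?thesis using sZ Wf_ind[OF sZ] res unfolding Z_def Q_def Wf_def by blast
qed

end



context setting
begin

lemma key:
  assumes X: "X \<in> spread_B (cone Fq \<Omega> Bb)"
  shows "\<exists>W. vsub UNIV k W \<and> X \<subseteq> W \<and> W \<inter> KV \<subseteq> X"
proof -
  have Xp: "X \<in> proj_points UNIV" and "\<exists>Q\<in>cone Fq \<Omega> Bb. Q \<subseteq> X" using X unfolding spread_B_def by auto
  then obtain Q where Q: "Q \<in> cone Fq \<Omega> Bb" "Q \<subseteq> X" by blast
  obtain x where x: "x \<noteq> 0" "X = span_over UNIV {x}"
    using vsub1_D[OF subfld_UNIV] Xp unfolding proj_points_def by blast
  obtain P where P: "P \<in> Bb" "Q \<in> proj_points Fq" "Q \<subseteq> span_over Fq (P \<union> \<Omega>)"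
    using Q(1) unfolding cone_def by blast
  have QP: "Q \<subseteq> sumset P \<Omega>" using P sumsetPO by simp
  obtain u where u: "u \<noteq> 0" "Q = span_over Fq {u}" using vsub1_D[OF Fq] P(2) unfolding proj_points_def by blast
  define M0 where "M0 = X \<inter> S"
  have PS: "sumset P \<Omega> \<subseteq> S" unfolding S_def sumset_def using Bb_point[OF P(1)] by blast
  have QM: "Q \<subseteq> M0" unfolding M0_def using Q(2) QP PS by blast
  have cQ: "card Q = q" using card_line[OF Fq u(1)] cardFq u(2) by simp
  have Qs: "subsp Fq Q" unfolding u(2) by (rule span_over_sub[OF Fq])
  have XU: "subsp UNIV X" unfolding x(2) by (rule span_over_sub[OF subfld_UNIV])
  have M0s: "subsp Fq M0" unfolding M0_def by (rule subsp_Int[OF UNIV_sub[OF XU] S_sub])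
  have M0x: "M0 = span_over UNIV {x} \<inter> S" unfolding M0_def x(2) ..
  have pw: "q ^ a * q ^ b \<le> q ^ c" if "a + b \<le> c" for a b c
    using that q2 by (simp flip: power_add add: power_increasing)
  show ?thesis
  proof (cases "q ^ 2 \<le> card M0")
    case True
    have bound: "q ^ (E + 2) * q ^ (t * j) \<le> q ^ (k * t + E - t) * card M0" if j: "j < k" for j
    proof -
      have "t * j + t \<le> k * t" using j by (metis Suc_leI mult.commute mult_Suc_right mult_le_mono2 add.commute)
      hence "E + 2 + t * j \<le> (k * t + E - t) + 2" by simp
      hence "q ^ (E + 2) * q ^ (t * j) \<le> q ^ (k * t + E - t) * q ^ 2"
        using q2 by (simp flip: power_add add: power_increasing)
      also have "\<dots> \<le> q ^ (k * t + E - t) * card M0" using True by simp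
      finally show ?thesis .
    qed
    have "\<exists>B. finite B \<and> indep_over UNIV B \<and> card B = k
           \<and> span_over UNIV {x} \<subseteq> span_over UNIV B \<and> span_over UNIV B \<inter> S = M0"
      by (rule iter[OF x(1) M0x bound]) (use k in auto)
    then obtain B where B: "finite B" "indep_over UNIV B" "card B = k"
      "span_over UNIV {x} \<subseteq> span_over UNIV B" "span_over UNIV B \<inter> S = M0" by blast
    have "vsub UNIV k (span_over UNIV B)" by (rule vsub_I[OF B(1-3)])
    moreover have "X \<subseteq> span_over UNIV B" using B(4) x(2) by simp
    moreover have "span_over UNIV B \<inter> KV \<subseteq> X" using B(5) KV_S unfolding M0_def by blast
    ultimately show ?thesis by blast
  next
    case False
    have M0Q: "M0 = Q"
    proof (rule ccontr)
      assume "M0 \<noteq> Q"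
      then obtain y where y: "y \<in> M0" "y \<notin> Q" using QM by blast
      have "card Fq * card Q \<le> card M0" by (rule dir_le[OF Fq Qs M0s QM y])
      thus False using False cQ cardFq by (simp add: power2_eq_square)
    qed
    have k2: "k \<ge> 2"
    proof (rule ccontr)
      assume "\<not> k \<ge> 2"
      hence k1: "k = 1" using k by simp
      have cX: "card X = q ^ t" using vsubU[of 1 X] Xp unfolding proj_points_def by simp
      have "card X * card S \<le> card M0 * card (UNIV :: ('a^'n) set)"
        unfolding M0_def by (rule PF_le[OF Fq UNIV_sub[OF XU] S_sub]) simp
      moreover have "card X * card S = q ^ 2 * q ^ (k * t + E)"
      proof -
        have "card X * card S = q ^ (t + (E + 2))" by (simp add: cX card_S power_add)
        also have "t + (E + 2) = 2 + (k * t + E)" using k1 by simp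
        also have "q ^ (2 + (k * t + E)) = q ^ 2 * q ^ (k * t + E)" by (simp only: power_add)
        finally show ?thesis .
      qed
      ultimately have "q ^ 2 * q ^ (k * t + E) \<le> card M0 * q ^ (k * t + E)" using cardV by simp
      hence "q ^ 2 \<le> card M0" by (rule cancel_pos) (use q2 in simp)
      thus False using False by simp
    qed
    have bound: "q ^ (E + 2) * q ^ (t * j) \<le> q ^ (k * t + E - t) * card M0" if j: "j < k - 1" for j
    proof -
      have "t * (j + 2) \<le> t * k" using j by (intro mult_le_mono2) simp
      hence "t * j + t + 1 \<le> k * t" using t by (simp add: algebra_simps)
      hence "E + 2 + t * j \<le> (k * t + E - t) + 1" by simp
      hence "q ^ (E + 2 + t * j) \<le> q ^ ((k * t + E - t) + 1)"
        by (rule power_increasing) (use q2 in simp)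
      hence "q ^ (E + 2) * q ^ (t * j) \<le> q ^ (k * t + E - t) * q ^ 1" by (simp only: power_add)
      also have "\<dots> = q ^ (k * t + E - t) * card M0" using M0Q cQ by simp
      finally show ?thesis .
    qed
    have "\<exists>B. finite B \<and> indep_over UNIV B \<and> card B = k - 1
           \<and> span_over UNIV {x} \<subseteq> span_over UNIV B \<and> span_over UNIV B \<inter> S = M0"
      by (rule iter[OF x(1) M0x bound]) (use k2 in auto)
    then obtain B where B: "finite B" "indep_over UNIV B" "card B = k - 1"
      "span_over UNIV {x} \<subseteq> span_over UNIV B" "span_over UNIV B \<inter> S = M0" by blast
    have ZS: "span_over UNIV B \<inter> S = span_over Fq {u}" using B(5) M0Q u(2) by simp
    obtain s where s: "s \<notin> span_over UNIV B" "indep_over UNIV (insert s B)"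
      "span_over UNIV (insert s B) \<inter> KV \<subseteq> span_over Fq {u}"
      using last_step[OF B(1-3) k2 ZS u(1) P(1)] QP u(2) by blast
    have sB: "s \<notin> B" using s(1) span_over_inc[of UNIV B] by auto
    have "vsub UNIV k (span_over UNIV (insert s B))"
      by (rule vsub_I) (use B(1,3) sB s(2) k2 in auto)
    moreover have "X \<subseteq> span_over UNIV (insert s B)"
      using B(4) x(2) span_over_mono[of B "insert s B" UNIV] by auto
    moreover have "span_over UNIV (insert s B) \<inter> KV \<subseteq> X" using s(3) u(2) Q(2) by blast
    ultimately show ?thesis by blast
  qed
qed

lemma isolate:
  assumes X: "X \<in> proj_points UNIV" and W: "X \<subseteq> W" "W \<inter> KV \<subseteq> X"
    and X': "X' \<in> spread_B (cone Fq \<Omega> Bb)" "X' \<subseteq> W"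
  shows "X' = X"
proof -
  have X'p: "X' \<in> proj_points UNIV" and "\<exists>Q\<in>cone Fq \<Omega> Bb. Q \<subseteq> X'" using X' unfolding spread_B_def by auto
  then obtain Q where Q: "Q \<in> cone Fq \<Omega> Bb" "Q \<subseteq> X'" by blast
  obtain P where P: "P \<in> Bb" "Q \<in> proj_points Fq" "Q \<subseteq> span_over Fq (P \<union> \<Omega>)"
    using Q(1) unfolding cone_def by blast
  obtain u where u: "u \<noteq> 0" "Q = span_over Fq {u}" using vsub1_D[OF Fq] P(2) unfolding proj_points_def by blast
  have uQ: "u \<in> Q" using u(2) span_over_inc[OF subfldD(2)[OF Fq], of "{u}"] by auto
  have "u \<in> sumset P \<Omega>" using uQ P(3) sumsetPO[OF P(1)] by auto
  hence uKV: "u \<in> KV" unfolding KV_def using P(1) by blast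
  have uX: "u \<in> X" using uQ Q(2) X'(2) uKV W(2) by blast
  obtain x where x: "x \<noteq> 0" "X = span_over UNIV {x}"
    using vsub1_D[OF subfld_UNIV] X unfolding proj_points_def by blast
  obtain x' where x': "x' \<noteq> 0" "X' = span_over UNIV {x'}"
    using vsub1_D[OF subfld_UNIV] X'p unfolding proj_points_def by blast
  have "X = span_over UNIV {u}" using line_eq[OF subfld_UNIV, of u x] uX u(1) x(2) by simp
  moreover have "X' = span_over UNIV {u}" using line_eq[OF subfld_UNIV, of u x'] uQ Q(2) u(1) x'(2) by auto
  ultimately show ?thesis by simp
qed

lemma main: "minimal_blocking (proj_points UNIV) {W. vsub UNIV k W} (spread_B (cone Fq \<Omega> Bb))"
  unfolding minimal_blocking_def
proof (intro conjI allI impI)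
  show "blocking (proj_points UNIV) {W. vsub UNIV k W} (spread_B (cone Fq \<Omega> Bb))" by (rule blocking_part)
next
  fix A' assume A': "A' \<subset> spread_B (cone Fq \<Omega> Bb)"
  then obtain X where X: "X \<in> spread_B (cone Fq \<Omega> Bb)" "X \<notin> A'" by blast
  obtain W where W: "vsub UNIV k W" "X \<subseteq> W" "W \<inter> KV \<subseteq> X" using key[OF X(1)] by blast
  have Xp: "X \<in> proj_points UNIV" using X(1) unfolding spread_B_def by blast
  show "\<not> blocking (proj_points UNIV) {W. vsub UNIV k W} A'"
  proof
    assume "blocking (proj_points UNIV) {W. vsub UNIV k W} A'"
    then obtain X' where X': "X' \<in> A'" "X' \<subseteq> W" using W(1) unfolding blocking_def by blast
    have "X' \<in> spread_B (cone Fq \<Omega> Bb)" using X'(1) A' by blast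
    hence "X' = X" using isolate[OF Xp W(2,3) _ X'(2)] by blast
    thus False using X'(1) X(2) by simp
  qed
qed

end

theorem theorem4p4:
  fixes q t k :: nat
    and \<Omega> \<Gamma> :: "('a::{field,finite} ^ 'n) set"
    and Bb :: "('a ^ 'n) set set"
  defines "Fq \<equiv> subfield_q q :: 'a set"
  defines "n \<equiv> CARD('n)"
  assumes "\<exists>p e. prime p \<and> e > 0 \<and> q = p ^ e"
    and "t > 0" and "k > 0" and "k < n"
    and "CARD('a) = q ^ t"
    and \<Omega>: "vsub Fq (n * t - k * t - 1) \<Omega>"
    and \<Gamma>: "vsub Fq 3 \<Gamma>"
    and skew: "\<Gamma> \<inter> \<Omega> = {0}"
    and minB: "minimal_blocking {P \<in> proj_points Fq. P \<subseteq> \<Gamma>}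
                 {L. vsub Fq 2 L \<and> L \<subseteq> \<Gamma>} Bb"
    and tang: "\<forall>P\<in>Bb. card {L. vsub Fq 2 L \<and> L \<subseteq> \<Gamma> \<and> P \<subseteq> L
                              \<and> card {R\<in>Bb. R \<subseteq> L} = 1} \<ge> 2"
  shows "minimal_blocking (proj_points UNIV) {W. vsub UNIV k W}
           (spread_B (cone Fq \<Omega> Bb))"
proof -
  obtain p e where pe: "prime p" "e > 0" "q = p ^ e" using assms(3) by blast
  have F: "subfld Fq" "card Fq = q" unfolding Fq_def using Fq_facts[OF pe assms(4) assms(7)] by auto
  have p2: "p \<ge> 2" using pe(1) by (simp add: prime_ge_2_nat)
  have "p ^ 1 \<le> p ^ e" using pe(2) p2 by (intro power_increasing) auto
  hence q2: "q \<ge> 2" using pe(3) p2 by simp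
  interpret S: setting q t k "CARD('n) * t - k * t" Fq \<Omega> \<Gamma> Bb
    by (unfold_locales) (use F q2 assms(4,5,6,7) \<Omega> \<Gamma> skew minB tang in \<open>simp_all add: n_def\<close>)
  show ?thesis by (rule S.main)
qed



end
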